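(* Let $P$ be a normal program and $S$ a set of queries. Then $P$ LDNF-terminates with respect to $S$ if and only if $M_4\cup\mathit{ce}(P)$ LDNF-terminates with respect to $\{\mathit{solve}(Q)\mid Q\in S\}$.
   Context: A normal program has clauses whose bodies are sequences of literals (atoms $A$ or negated atoms $\neg A$), with negation as finite failure. A query LDNF-terminates for a program if its LDNF-forest (SLDNF-resolution with the leftmost selection rule) is finite; a program LDNF-terminates w.r.t. a set of queries if it does so for every query in the set. Clause encoding: a body $L_1,\dots,L_n$ ($n\ge1$) is represented as the term $(L_1,(L_2,\dots,L_n))$ with a binary functor $,/2$, a negative literal $\neg A$ as the term $\neg A$, and an empty body by the constant $\mathit{true}$; $\mathit{ce}(P)$ is the set of facts $\mathit{clause}(H,B)$, one per clause $H\leftarrow B$ of $P$; the symbols $,/2$, $\mathit{clause}$, $\mathit{solve}$ do not occur in the language of $P$. A query $Q=L_1,\dots,L_n$ is encoded in $\mathit{solve}(Q)$ in the same way. $M_4$ is the program $\mathit{solve}(\mathit{true}).$ $\mathit{solve}((A,B))\leftarrow\mathit{solve}(A),\mathit{solve}(B).$ $\mathit{solve}(\neg A)\leftarrow\neg\mathit{solve}(A).$ $\mathit{solve}(H)\leftarrow\mathit{clause}(H,B),\mathit{solve}(B).$ *)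

theory Defs
  imports Main
begin

datatype 'f trm = Var nat | Fn 'f "'f trm list"

type_synonym 'f atom = "'f \<times> 'f trm list"

datatype 'f lit = Pos "'f atom" | Neg "'f atom"

type_synonym 'f clause = "'f atom \<times> 'f lit list"
type_synonym 'f query = "'f lit list"
type_synonym 'f subst = "nat \<Rightarrow> 'f trm"

fun tsubst :: "'f subst \<Rightarrow> 'f trm \<Rightarrow> 'f trm" where
  "tsubst \<sigma> (Var x) = \<sigma> x"
| "tsubst \<sigma> (Fn f ts) = Fn f (map (tsubst \<sigma>) ts)"

definition asubst :: "'f subst \<Rightarrow> 'f atom \<Rightarrow> 'f atom" where
  "asubst \<sigma> a = (fst a, map (tsubst \<sigma>) (snd a))"

fun lsubst :: "'f subst \<Rightarrow> 'f lit \<Rightarrow> 'f lit" where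
  "lsubst \<sigma> (Pos a) = Pos (asubst \<sigma> a)"
| "lsubst \<sigma> (Neg a) = Neg (asubst \<sigma> a)"

definition csubst :: "'f subst \<Rightarrow> 'f clause \<Rightarrow> 'f clause" where
  "csubst \<sigma> c = (asubst \<sigma> (fst c), map (lsubst \<sigma>) (snd c))"

fun tvars :: "'f trm \<Rightarrow> nat set" where
  "tvars (Var x) = {x}"
| "tvars (Fn f ts) = \<Union> (set (map tvars ts))"

definition avars :: "'f atom \<Rightarrow> nat set" where
  "avars a = \<Union> (set (map tvars (snd a)))"

fun lvars :: "'f lit \<Rightarrow> nat set" where
  "lvars (Pos a) = avars a"
| "lvars (Neg a) = avars a"

definition qvars :: "'f query \<Rightarrow> nat set" where
  "qvars Q = \<Union> (set (map lvars Q))"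

definition cvars :: "'f clause \<Rightarrow> nat set" where
  "cvars c = avars (fst c) \<union> qvars (snd c)"

definition ground_atom :: "'f atom \<Rightarrow> bool" where
  "ground_atom a \<longleftrightarrow> avars a = {}"

definition renaming :: "'f subst \<Rightarrow> bool" where
  "renaming \<rho> \<longleftrightarrow> (\<forall>x. \<exists>y. \<rho> x = Var y) \<and> inj \<rho>"

definition unifier :: "'f subst \<Rightarrow> 'f atom \<Rightarrow> 'f atom \<Rightarrow> bool" where
  "unifier \<theta> a b \<longleftrightarrow> asubst \<theta> a = asubst \<theta> b"

definition is_mgu :: "'f subst \<Rightarrow> 'f atom \<Rightarrow> 'f atom \<Rightarrow> bool" where
  "is_mgu \<theta> a b \<longleftrightarrow> unifier \<theta> a b \<and>
     (\<forall>\<sigma>. unifier \<sigma> a b \<longrightarrow> (\<exists>\<delta>. \<forall>x. \<sigma> x = tsubst \<delta> (\<theta> x)))"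

text \<open>ld_resolvent P Q Q': Q' is an LD-resolvent of Q (leftmost literal
 positive) with a variant of a clause of P renamed apart from Q, via an mgu.
 All variants and all mgus are admitted.\<close>
definition ld_resolvent :: "'f clause set \<Rightarrow> 'f query \<Rightarrow> 'f query \<Rightarrow> bool" where
  "ld_resolvent P Q Q' \<longleftrightarrow> (\<exists>A R. Q = Pos A # R \<and>
     (\<exists>c\<in>P. \<exists>\<rho> \<theta>. renaming \<rho> \<and> cvars (csubst \<rho> c) \<inter> qvars Q = {} \<and>
        is_mgu \<theta> A (fst (csubst \<rho> c)) \<and>
        Q' = map (lsubst \<theta>) (snd (csubst \<rho> c) @ R)))"

text \<open>Subsidiary trees are those with root the single atom A of a selected
 ground negative literal (non-ground ones flounder).\<close>
inductive ldnf_succeeds :: "'f clause set \<Rightarrow> 'f query \<Rightarrow> bool"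
  and ldnf_ffails :: "'f clause set \<Rightarrow> 'f query \<Rightarrow> bool"
  for P :: "'f clause set" where
  succ_nil: "ldnf_succeeds P []"
| succ_pos: "ld_resolvent P (Pos A # R) Q' \<Longrightarrow> ldnf_succeeds P Q' \<Longrightarrow>
     ldnf_succeeds P (Pos A # R)"
| succ_neg: "ground_atom A \<Longrightarrow> ldnf_ffails P [Pos A] \<Longrightarrow> ldnf_succeeds P R \<Longrightarrow>
     ldnf_succeeds P (Neg A # R)"
| ff_pos: "(\<forall>Q'. ld_resolvent P (Pos A # R) Q' \<longrightarrow> ldnf_ffails P Q') \<Longrightarrow>
     ldnf_ffails P (Pos A # R)"
| ff_neg_succ: "ground_atom A \<Longrightarrow> ldnf_succeeds P [Pos A] \<Longrightarrow>
     ldnf_ffails P (Neg A # R)"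
| ff_neg_ff: "ground_atom A \<Longrightarrow> ldnf_ffails P [Pos A] \<Longrightarrow> ldnf_ffails P R \<Longrightarrow>
     ldnf_ffails P (Neg A # R)"

text \<open>ldnf_terminates P Q: the LDNF-forest of Q (main tree and, recursively,
 all subsidiary trees) is finite. For finite P every node has finitely many
 children up to variants, so finiteness coincides with this well-foundedness
 formulation.\<close>
inductive ldnf_terminates :: "'f clause set \<Rightarrow> 'f query \<Rightarrow> bool"
  for P :: "'f clause set" where
  term_nil: "ldnf_terminates P []"
| term_pos: "(\<forall>Q'. ld_resolvent P (Pos A # R) Q' \<longrightarrow> ldnf_terminates P Q') \<Longrightarrow>
     ldnf_terminates P (Pos A # R)"
| term_flounder: "\<not> ground_atom A \<Longrightarrow> ldnf_terminates P (Neg A # R)"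
| term_neg: "ground_atom A \<Longrightarrow> ldnf_terminates P [Pos A] \<Longrightarrow>
     (ldnf_ffails P [Pos A] \<longrightarrow> ldnf_terminates P R) \<Longrightarrow>
     ldnf_terminates P (Neg A # R)"

definition ldnf_terminates_wrt :: "'f clause set \<Rightarrow> 'f query set \<Rightarrow> bool" where
  "ldnf_terminates_wrt P S \<longleftrightarrow> (\<forall>Q\<in>S. ldnf_terminates P Q)"

datatype 'f msym = Usr 'f | Comma | NegSym | TrueSym | Solve | ClauseSym

definition enc_atom :: "'f atom \<Rightarrow> 'f msym trm" where
  "enc_atom a = Fn (Usr (fst a)) (map (map_trm Usr) (snd a))"

fun enc_lit :: "'f lit \<Rightarrow> 'f msym trm" where
  "enc_lit (Pos a) = enc_atom a"
| "enc_lit (Neg a) = Fn NegSym [enc_atom a]"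

fun enc_body :: "'f lit list \<Rightarrow> 'f msym trm" where
  "enc_body [] = Fn TrueSym []"
| "enc_body [L] = enc_lit L"
| "enc_body (L # L' # Ls) = Fn Comma [enc_lit L, enc_body (L' # Ls)]"

definition M4 :: "'f msym clause set" where
  "M4 = {
     ((Solve, [Fn TrueSym []]), []),
     ((Solve, [Fn Comma [Var 0, Var 1]]), [Pos (Solve, [Var 0]), Pos (Solve, [Var 1])]),
     ((Solve, [Fn NegSym [Var 0]]), [Neg (Solve, [Var 0])]),
     ((Solve, [Var 0]), [Pos (ClauseSym, [Var 0, Var 1]), Pos (Solve, [Var 1])]) }"

definition ce :: "'f clause set \<Rightarrow> 'f msym clause set" where
  "ce P = (\<lambda>c. ((ClauseSym, [enc_atom (fst c), enc_body (snd c)]), [])) ` P"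

definition solve_query :: "'f query \<Rightarrow> 'f msym query" where
  "solve_query Q = [Pos (Solve, [enc_body Q])]"

end

theory Submission
  imports Defs
begin
lemma tsubst_comp: "tsubst \<sigma> (tsubst \<tau> t) = tsubst (\<lambda>x. tsubst \<sigma> (\<tau> x)) t"
  by (induction t) auto

lemma tsubst_cong: "(\<And>x. x \<in> tvars t \<Longrightarrow> \<sigma> x = \<tau> x) \<Longrightarrow> tsubst \<sigma> t = tsubst \<tau> t"
  by (induction t) auto

lemma tsubst_Var[simp]: "tsubst Var t = t"
  by (induction t) (auto simp: map_idI)

lemma tvars_tsubst: "tvars (tsubst \<sigma> t) = (\<Union>x\<in>tvars t. tvars (\<sigma> x))"
  by (induction t) auto

lemma finite_tvars[simp]: "finite (tvars t)"
  by (induction t) auto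

lemma tsubst_id_vars: "tsubst \<delta> u = u \<Longrightarrow> n \<in> tvars u \<Longrightarrow> \<delta> n = Var n"
proof (induction u)
  case (Var x) then show ?case by simp
next
  case (Fn f ts)
  then obtain t where "t \<in> set ts" "n \<in> tvars t" by auto
  moreover from Fn.prems(1) have "map (tsubst \<delta>) ts = ts" by simp
  then have "\<forall>t\<in>set ts. tsubst \<delta> t = t" by (metis map_eq_conv map_idI list.map_id0 id_apply map_ident)
  ultimately show ?case using Fn.IH by blast
qed

lemma asubst_comp: "asubst \<sigma> (asubst \<tau> a) = asubst (\<lambda>x. tsubst \<sigma> (\<tau> x)) a"
  by (simp add: asubst_def tsubst_comp)
lemma asubst_cong: "(\<And>x. x \<in> avars a \<Longrightarrow> \<sigma> x = \<tau> x) \<Longrightarrow> asubst \<sigma> a = asubst \<tau> a"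
  by (auto simp: asubst_def avars_def intro!: tsubst_cong)
lemma avars_asubst: "avars (asubst \<sigma> a) = (\<Union>x\<in>avars a. tvars (\<sigma> x))"
  by (auto simp: asubst_def avars_def tvars_tsubst)
lemma fst_asubst[simp]: "fst (asubst \<sigma> a) = fst a"
  by (simp add: asubst_def)
lemma tsubst_Var_fun[simp]: "tsubst Var = id"
  by (rule ext) simp
lemma asubst_Var[simp]: "asubst Var a = a"
  by (simp add: asubst_def)
lemma finite_avars[simp]: "finite (avars a)"
  by (simp add: avars_def)

lemma lsubst_comp: "lsubst \<sigma> (lsubst \<tau> l) = lsubst (\<lambda>x. tsubst \<sigma> (\<tau> x)) l"
  by (cases l) (auto simp: asubst_comp)
lemma lsubst_cong: "(\<And>x. x \<in> lvars l \<Longrightarrow> \<sigma> x = \<tau> x) \<Longrightarrow> lsubst \<sigma> l = lsubst \<tau> l"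
  by (cases l) (auto intro!: asubst_cong)
lemma lvars_lsubst: "lvars (lsubst \<sigma> l) = (\<Union>x\<in>lvars l. tvars (\<sigma> x))"
  by (cases l) (auto simp: avars_asubst)
lemma lsubst_Var[simp]: "lsubst Var l = l"
  by (cases l) auto
lemma lsubst_Var_fun[simp]: "lsubst Var = id"
  by (rule ext) simp
lemma finite_lvars[simp]: "finite (lvars l)"
  by (cases l) auto

lemma qsubst_comp: "map (lsubst \<sigma>) (map (lsubst \<tau>) Q) = map (lsubst (\<lambda>x. tsubst \<sigma> (\<tau> x))) Q"
  by (simp add: lsubst_comp)
lemma qsubst_cong: "(\<And>x. x \<in> qvars Q \<Longrightarrow> \<sigma> x = \<tau> x) \<Longrightarrow> map (lsubst \<sigma>) Q = map (lsubst \<tau>) Q"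
  by (auto simp: qvars_def intro!: lsubst_cong)
lemma qvars_qsubst: "qvars (map (lsubst \<sigma>) Q) = (\<Union>x\<in>qvars Q. tvars (\<sigma> x))"
  by (auto simp: qvars_def lvars_lsubst)
lemma finite_qvars[simp]: "finite (qvars Q)"
  by (simp add: qvars_def)
lemma qvars_simps[simp]: "qvars [] = {}" "qvars (l # Q) = lvars l \<union> qvars Q"
  "qvars (Q @ Q') = qvars Q \<union> qvars Q'"
  by (auto simp: qvars_def)

lemma cvars_csubst: "cvars (csubst \<sigma> c) = (\<Union>x\<in>cvars c. tvars (\<sigma> x))"
  by (simp add: cvars_def csubst_def avars_asubst qvars_qsubst)
lemma csubst_comp: "csubst \<sigma> (csubst \<tau> c) = csubst (\<lambda>x. tsubst \<sigma> (\<tau> x)) c"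
  by (simp add: csubst_def asubst_comp lsubst_comp)
lemma finite_cvars[simp]: "finite (cvars c)"
  by (simp add: cvars_def)

definition atm :: "'f atom \<Rightarrow> 'f trm" where "atm a = Fn (fst a) (snd a)"

lemma atm_subst: "tsubst \<sigma> (atm a) = atm (asubst \<sigma> a)"
  by (simp add: atm_def asubst_def)
lemma atm_inj: "atm a = atm b \<longleftrightarrow> a = b"
  by (cases a; cases b) (auto simp: atm_def)
lemma tvars_atm: "tvars (atm a) = avars a"
  by (simp add: atm_def avars_def)
lemma unifier_atm: "unifier \<sigma> a b \<longleftrightarrow> tsubst \<sigma> (atm a) = tsubst \<sigma> (atm b)"
  by (simp add: unifier_def atm_subst atm_inj)

definition vr :: "(nat \<Rightarrow> nat) \<Rightarrow> 'f subst" where "vr f = (\<lambda>x. Var (f x))"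
abbreviation ren :: "(nat \<Rightarrow> nat) \<Rightarrow> 'f query \<Rightarrow> 'f query" where
  "ren f Q \<equiv> map (lsubst (vr f)) Q"

lemma tvars_vr[simp]: "tvars (vr f x) = {f x}" by (simp add: vr_def)
lemma tsubst_vr_vr: "(\<lambda>x. tsubst (vr g) (vr f x)) = vr (g \<circ> f)" by (simp add: vr_def)

lemma ren_comp: "ren g (ren f Q) = ren (g \<circ> f) Q"
  by (simp add: lsubst_comp tsubst_vr_vr)
lemma vr_id: "vr id = Var" by (auto simp: vr_def)
lemma ren_id: "ren id Q = Q"
proof -
  have "vr id = Var" by (auto simp: vr_def)
  then show ?thesis by (simp only: vr_id lsubst_Var_fun list.map_id)
qed
lemma qvars_ren: "qvars (ren f Q) = f ` qvars Q"
  by (auto simp: qvars_qsubst)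

lemma tvars_map_trm[simp]: "tvars (map_trm g t) = tvars t"
  by (induction t) auto

lemma tsubst_usr: "(\<And>x. x \<in> tvars t \<Longrightarrow> \<theta> x = map_trm Usr (\<sigma> x)) \<Longrightarrow>
   tsubst \<theta> (map_trm Usr t) = map_trm Usr (tsubst \<sigma> t)"
  by (induction t) auto

lemma enc_atom_atm: "enc_atom a = map_trm Usr (atm a)"
  by (simp add: enc_atom_def atm_def)

lemma tvars_enc_atom[simp]: "tvars (enc_atom a) = avars a"
  by (simp add: enc_atom_atm tvars_atm)
lemma tvars_enc_lit[simp]: "tvars (enc_lit l) = lvars l"
  by (cases l) auto
lemma tvars_enc_body[simp]: "tvars (enc_body Q) = qvars Q"
  by (induction Q rule: enc_body.induct) auto

lemma enc_atom_subst: "(\<And>x. x \<in> avars a \<Longrightarrow> \<theta> x = map_trm Usr (\<sigma> x)) \<Longrightarrow>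
   tsubst \<theta> (enc_atom a) = enc_atom (asubst \<sigma> a)"
  unfolding enc_atom_atm atm_subst[symmetric] by (rule tsubst_usr) (simp add: tvars_atm)
lemma enc_lit_subst: "(\<And>x. x \<in> lvars l \<Longrightarrow> \<theta> x = map_trm Usr (\<sigma> x)) \<Longrightarrow>
   tsubst \<theta> (enc_lit l) = enc_lit (lsubst \<sigma> l)"
  by (cases l) (auto simp: enc_atom_subst)
lemma enc_body_subst: "(\<And>x. x \<in> qvars Q \<Longrightarrow> \<theta> x = map_trm Usr (\<sigma> x)) \<Longrightarrow>
   tsubst \<theta> (enc_body Q) = enc_body (map (lsubst \<sigma>) Q)"
  by (induction Q rule: enc_body.induct) (auto simp: enc_lit_subst)

fun dec :: "'f msym trm \<Rightarrow> 'f trm" where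
  "dec (Var x) = Var x"
| "dec (Fn (Usr f) ts) = Fn f (map dec ts)"
| "dec (Fn _ ts) = Var 0"

lemma dec_usr[simp]: "dec (map_trm Usr t) = t"
  by (induction t) (auto simp: map_idI)

lemma inst_usr: "tsubst \<delta> t = map_trm Usr s \<Longrightarrow> t = map_trm Usr (dec t)"
proof (induction t arbitrary: s)
  case (Var x) then show ?case by simp
next
  case (Fn g ts)
  then obtain f ss where s: "s = Fn f ss" and g: "g = Usr f" and m: "map (tsubst \<delta>) ts = map (map_trm Usr) ss"
    by (cases s) auto
  have "\<forall>t\<in>set ts. t = map_trm Usr (dec t)"
  proof
    fix t assume t: "t \<in> set ts"
    then obtain i where i: "i < length ts" "ts ! i = t" by (metis in_set_conv_nth)
    from m have "length ss = length ts" by (metis length_map)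
    with m i have "tsubst \<delta> t = map_trm Usr (ss ! i)" by (metis nth_map)
    then show "t = map_trm Usr (dec t)" using Fn.IH t by blast
  qed
  then show ?case using g by (auto intro: map_idI[symmetric])
qed

lemma perm_ext:
  fixes f :: "'a \<Rightarrow> 'a"
  assumes fin: "finite D" and inj: "inj_on f D"
  shows "\<exists>\<pi>. bij \<pi> \<and> (\<forall>x\<in>D. \<pi> x = f x)"
proof -
  let ?B = "f ` D"
  have cB: "card ?B = card D" using inj by (simp add: card_image)
  have finB: "finite ?B" using fin by simp
  have "card (?B - D) = card ?B - card (?B \<inter> D)"
    using finB by (metis card_Diff_subset_Int finite_Int)
  moreover have "card (D - ?B) = card D - card (D \<inter> ?B)"
    using fin by (metis card_Diff_subset_Int finite_Int)
  ultimately have "card (?B - D) = card (D - ?B)" using cB by (simp add: Int_commute)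
  then obtain h where h: "bij_betw h (?B - D) (D - ?B)"
    using finite_same_card_bij finB fin by (metis finite_Diff)
  define \<pi> where "\<pi> x = (if x \<in> D then f x else if x \<in> ?B then h x else x)" for x
  have hin: "x \<in> ?B - D \<Longrightarrow> h x \<in> D - ?B" for x using h by (auto simp: bij_betw_def)
  have inj\<pi>: "inj \<pi>"
  proof (rule injI)
    fix x y assume e: "\<pi> x = \<pi> y"
    show "x = y"
    proof (cases "x \<in> D")
      case True
      then show ?thesis
      proof (cases "y \<in> D")
        case True with \<open>x \<in> D\<close> e inj show ?thesis by (auto simp: \<pi>_def inj_on_def)
      next
        case False
        have "\<pi> x \<in> ?B" using True by (simp add: \<pi>_def)
        moreover have "\<pi> y \<notin> ?B" using False hin[of y] by (auto simp: \<pi>_def)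
        ultimately show ?thesis using e by simp
      qed
    next
      case False
      then show ?thesis
      proof (cases "y \<in> D")
        case True
        have "\<pi> y \<in> ?B" using True by (simp add: \<pi>_def)
        moreover have "\<pi> x \<notin> ?B" using False hin[of x] by (auto simp: \<pi>_def)
        ultimately show ?thesis using e by simp
      next
        case False
        with \<open>x \<notin> D\<close> e h hin[of x] hin[of y] show ?thesis
          by (auto simp: \<pi>_def bij_betw_def inj_on_def split: if_splits)
      qed
    qed
  qed
  have surj\<pi>: "surj \<pi>"
  proof -
    have "y \<in> range \<pi>" for y
    proof (cases "y \<in> ?B")
      case True then obtain x where "x \<in> D" "y = f x" by auto
      then show ?thesis by (metis \<pi>_def rangeI)
    next
      case False
      show ?thesis
      proof (cases "y \<in> D")
        case True
        with False have "y \<in> h ` (?B - D)" using h by (auto simp: bij_betw_def)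
        then obtain x where "x \<in> ?B - D" "y = h x" by auto
        then show ?thesis by (metis DiffD1 DiffD2 \<pi>_def rangeI)
      next
        case False2: False
        then show ?thesis using False by (metis \<pi>_def rangeI)
      qed
    qed
    then show ?thesis by auto
  qed
  have "bij \<pi>" using inj\<pi> surj\<pi> by (simp add: bij_def)
  moreover have "\<forall>x\<in>D. \<pi> x = f x" by (simp add: \<pi>_def)
  ultimately show ?thesis by blast
qed

lemma ground_asubst: "ground_atom A \<Longrightarrow> asubst \<sigma> A = A"
proof -
  assume "ground_atom A"
  then have "asubst \<sigma> A = asubst Var A" by (intro asubst_cong) (auto simp: ground_atom_def)
  then show ?thesis by simp
qed

lemma ground_asubst_iff: "ground_atom (asubst (vr f) A) \<longleftrightarrow> ground_atom A"
  by (simp add: ground_atom_def avars_asubst)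

lemma renaming_comp_bij:
  assumes "renaming \<rho>" "bij \<pi>"
  shows "renaming (\<lambda>x. tsubst (vr \<pi>) (\<rho> x))"
proof -
  have v: "\<forall>x. \<exists>y. \<rho> x = Var y" and i: "inj \<rho>" using assms(1) by (auto simp: renaming_def)
  have "\<forall>x. \<exists>y. tsubst (vr \<pi>) (\<rho> x) = Var y" using v by (metis tsubst.simps(1) vr_def)
  moreover have "inj (\<lambda>x. tsubst (vr \<pi>) (\<rho> x))"
  proof (rule injI)
    fix x y assume e: "tsubst (vr \<pi>) (\<rho> x) = tsubst (vr \<pi>) (\<rho> y)"
    obtain a b where "\<rho> x = Var a" "\<rho> y = Var b" using v by blast
    with e have "\<pi> a = \<pi> b" by (simp add: vr_def)
    then have "a = b" using assms(2) by (simp add: bij_def inj_eq)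
    then show "x = y" using i \<open>\<rho> x = Var a\<close> \<open>\<rho> y = Var b\<close> by (metis injD)
  qed
  ultimately show ?thesis by (simp add: renaming_def)
qed

lemma res_perm_core:
  assumes bij: "bij \<pi>" and c: "c \<in> P" and r: "renaming \<rho>"
    and ap: "cvars (csubst \<rho> c) \<inter> qvars (ren \<pi> (Pos A # R)) = {}"
    and mgu: "is_mgu \<theta> (asubst (vr \<pi>) A) (fst (csubst \<rho> c))"
  shows "\<exists>\<rho>' \<theta>'. renaming \<rho>' \<and> cvars (csubst \<rho>' c) = inv \<pi> ` cvars (csubst \<rho> c) \<and>
     cvars (csubst \<rho>' c) \<inter> qvars (Pos A # R) = {} \<and>
     is_mgu \<theta>' A (fst (csubst \<rho>' c)) \<and>
     map (lsubst \<theta>') (snd (csubst \<rho>' c) @ R) = map (lsubst \<theta>) (snd (csubst \<rho> c) @ ren \<pi> R)"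
proof -
  define \<rho>' where "\<rho>' = (\<lambda>x. tsubst (vr (inv \<pi>)) (\<rho> x))"
  define \<theta>' where "\<theta>' x = \<theta> (\<pi> x)" for x
  have bi: "bij (inv \<pi>)" using bij by (simp add: bij_imp_bij_inv)
  have pinv: "\<pi> (inv \<pi> x) = x" for x using bij by (simp add: bij_is_surj surj_f_inv_f)
  have invp: "inv \<pi> (\<pi> x) = x" for x using bij by (simp add: bij_is_inj)
  have r': "renaming \<rho>'" unfolding \<rho>'_def by (rule renaming_comp_bij[OF r bi])
  have cs: "csubst \<rho>' c = csubst (vr (inv \<pi>)) (csubst \<rho> c)"
    by (simp only: csubst_comp \<rho>'_def)
  have cv: "cvars (csubst \<rho>' c) = inv \<pi> ` cvars (csubst \<rho> c)"
    by (auto simp: cs cvars_csubst)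
  have qv: "qvars (ren \<pi> (Pos A # R)) = \<pi> ` qvars (Pos A # R)" by (rule qvars_ren)
  have ap': "cvars (csubst \<rho>' c) \<inter> qvars (Pos A # R) = {}"
  proof (rule ccontr)
    assume "cvars (csubst \<rho>' c) \<inter> qvars (Pos A # R) \<noteq> {}"
    then obtain y where "y \<in> cvars (csubst \<rho> c)" "inv \<pi> y \<in> qvars (Pos A # R)" using cv by auto
    then have "y \<in> qvars (ren \<pi> (Pos A # R))" using qv pinv by (metis image_eqI)
    with ap \<open>y \<in> cvars (csubst \<rho> c)\<close> show False by auto
  qed
  have t1: "(\<lambda>x. tsubst \<theta>' (vr (inv \<pi>) x)) = \<theta>" by (auto simp: vr_def \<theta>'_def pinv)
  have t2: "(\<lambda>x. tsubst \<theta> (vr \<pi> x)) = \<theta>'" by (auto simp: vr_def \<theta>'_def)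
  let ?H = "fst (csubst \<rho> c)"
  have H': "fst (csubst \<rho>' c) = asubst (vr (inv \<pi>)) ?H" by (simp only: cs) (simp add: csubst_def)
  have mg: "is_mgu \<theta>' A (fst (csubst \<rho>' c))"
    unfolding is_mgu_def
  proof (intro conjI allI impI)
    show "unifier \<theta>' A (fst (csubst \<rho>' c))"
      using mgu by (simp add: H' is_mgu_def unifier_def asubst_comp t1 t2)
  next
    fix \<sigma> assume u: "unifier \<sigma> A (fst (csubst \<rho>' c))"
    define \<sigma>' where "\<sigma>' x = \<sigma> (inv \<pi> x)" for x
    have s1: "(\<lambda>x. tsubst \<sigma>' (vr \<pi> x)) = \<sigma>" by (auto simp: vr_def \<sigma>'_def invp)
    have s2: "(\<lambda>x. tsubst \<sigma> (vr (inv \<pi>) x)) = \<sigma>'" by (auto simp: vr_def \<sigma>'_def)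
    have "unifier \<sigma>' (asubst (vr \<pi>) A) ?H"
      using u by (simp add: H' unifier_def asubst_comp s1 s2)
    then obtain \<delta> where d: "\<forall>x. \<sigma>' x = tsubst \<delta> (\<theta> x)" using mgu by (auto simp: is_mgu_def)
    have "\<sigma> x = tsubst \<delta> (\<theta>' x)" for x using d[rule_format, of "\<pi> x"] by (simp add: \<sigma>'_def invp \<theta>'_def)
    then show "\<exists>\<delta>. \<forall>x. \<sigma> x = tsubst \<delta> (\<theta>' x)" by blast
  qed
  have "map (lsubst \<theta>') (snd (csubst \<rho>' c) @ R) = map (lsubst \<theta>) (snd (csubst \<rho> c) @ ren \<pi> R)"
  proof -
    have t3: "(\<lambda>x. tsubst \<theta>' (\<rho>' x)) = (\<lambda>x. tsubst \<theta> (\<rho> x))"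
      by (simp add: \<rho>'_def tsubst_comp t1)
    show ?thesis by (simp add: csubst_def lsubst_comp t3 t2)
  qed
  then show ?thesis using r' cv ap' mg by blast
qed

lemma ren_Pos_cases: "ren \<pi> Q = Pos A' # R' \<Longrightarrow> \<exists>A R. Q = Pos A # R \<and> A' = asubst (vr \<pi>) A \<and> R' = ren \<pi> R"
  by (cases Q) (auto elim: lsubst.elims)

lemma res_ren:
  assumes bij: "bij \<pi>" and res: "ld_resolvent P (ren \<pi> Q) Q''"
  shows "ld_resolvent P Q Q''"
proof -
  from res obtain A' R' c \<rho> \<theta> where q: "ren \<pi> Q = Pos A' # R'" and c: "c \<in> P" and r: "renaming \<rho>"
    and ap: "cvars (csubst \<rho> c) \<inter> qvars (ren \<pi> Q) = {}" and m: "is_mgu \<theta> A' (fst (csubst \<rho> c))"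
    and Q'': "Q'' = map (lsubst \<theta>) (snd (csubst \<rho> c) @ R')"
    using res unfolding ld_resolvent_def by auto
  from ren_Pos_cases[OF q] obtain A R where Q: "Q = Pos A # R" "A' = asubst (vr \<pi>) A" "R' = ren \<pi> R" by blast
  from res_perm_core[OF bij c r, of A R \<theta>] ap m Q obtain \<rho>' \<theta>' where
    "renaming \<rho>'" "cvars (csubst \<rho>' c) \<inter> qvars (Pos A # R) = {}" "is_mgu \<theta>' A (fst (csubst \<rho>' c))"
    "map (lsubst \<theta>') (snd (csubst \<rho>' c) @ R) = Q''"
    using Q'' by auto
  then show ?thesis unfolding ld_resolvent_def using Q c by blast
qed

lemma ren_inv: "bij \<pi> \<Longrightarrow> ren (inv \<pi>) (ren \<pi> Q) = Q"
proof -
  assume b: "bij \<pi>"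
  have "inv \<pi> \<circ> \<pi> = id" using b by (simp add: bij_is_inj)
  moreover have "ren (inv \<pi>) (ren \<pi> Q) = ren (inv \<pi> \<circ> \<pi>) Q" by (rule ren_comp)
  ultimately show ?thesis by (simp add: ren_id)
qed

lemma res_ren2:
  assumes bij: "bij \<pi>" and res: "ld_resolvent P Q Q''"
  shows "ld_resolvent P (ren \<pi> Q) Q''"
proof -
  have "ld_resolvent P (ren (inv \<pi>) (ren \<pi> Q)) Q''" unfolding ren_inv[OF bij] by (rule res)
  then show ?thesis by (rule res_ren[OF bij_imp_bij_inv[OF bij]])
qed

lemma sem_ren:
  assumes "bij \<pi>"
  shows "ldnf_succeeds P Q \<Longrightarrow> ldnf_succeeds P (ren \<pi> Q)"
    and "ldnf_ffails P Q \<Longrightarrow> ldnf_ffails P (ren \<pi> Q)"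
proof (induction rule: ldnf_succeeds_ldnf_ffails.inducts)
  case succ_nil then show ?case by (simp add: ldnf_succeeds_ldnf_ffails.succ_nil)
next
  case (succ_pos A R Q')
  have "ld_resolvent P (ren \<pi> (Pos A # R)) Q'" by (rule res_ren2[OF assms succ_pos(1)])
  then show ?case using succ_pos by (auto intro: ldnf_succeeds_ldnf_ffails.succ_pos)
next
  case (succ_neg A R)
  then show ?case by (auto simp: ground_asubst intro: ldnf_succeeds_ldnf_ffails.succ_neg)
next
  case (ff_pos A R)
  then show ?case using res_ren[OF assms, of P "Pos A # R"] by (auto intro!: ldnf_succeeds_ldnf_ffails.ff_pos)
next
  case (ff_neg_succ A R)
  then show ?case by (auto simp: ground_asubst intro: ldnf_succeeds_ldnf_ffails.ff_neg_succ)
next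
  case (ff_neg_ff A R)
  then show ?case by (auto simp: ground_asubst intro: ldnf_succeeds_ldnf_ffails.ff_neg_ff)
qed

lemma term_ren:
  assumes "bij \<pi>"
  shows "ldnf_terminates P Q \<Longrightarrow> ldnf_terminates P (ren \<pi> Q)"
proof (induction rule: ldnf_terminates.induct)
  case term_nil then show ?case by (simp add: ldnf_terminates.term_nil)
next
  case (term_pos A R)
  then show ?case using res_ren[OF assms, of P "Pos A # R"] by (auto intro!: ldnf_terminates.term_pos)
next
  case (term_flounder A R)
  then show ?case by (auto simp: ground_asubst_iff intro: ldnf_terminates.term_flounder)
next
  case (term_neg A R)
  then show ?case by (auto simp: ground_asubst intro: ldnf_terminates.term_neg)
qed

definition variant :: "'f query \<Rightarrow> 'f query \<Rightarrow> bool" where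
  "variant Q1 Q2 \<longleftrightarrow> (\<exists>\<pi>. bij \<pi> \<and> Q2 = ren \<pi> Q1)"

lemma variant_refl: "variant Q Q"
  unfolding variant_def by (intro exI[of _ id] conjI bij_id) (simp only: ren_id)

lemma variant_sym: "variant Q1 Q2 \<Longrightarrow> variant Q2 Q1"
proof -
  assume "variant Q1 Q2"
  then obtain \<pi> where b: "bij \<pi>" and q: "Q2 = ren \<pi> Q1" unfolding variant_def by blast
  have "Q1 = ren (inv \<pi>) Q2" by (simp only: q ren_inv[OF b])
  then show ?thesis unfolding variant_def by (intro exI[of _ "inv \<pi>"] conjI bij_imp_bij_inv b)
qed

lemma variant_trans: "variant Q1 Q2 \<Longrightarrow> variant Q2 Q3 \<Longrightarrow> variant Q1 Q3"
proof -
  assume a: "variant Q1 Q2" "variant Q2 Q3"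
  from a(1) obtain \<pi>1 where b1: "bij \<pi>1" and q1: "Q2 = ren \<pi>1 Q1" unfolding variant_def by blast
  from a(2) obtain \<pi>2 where b2: "bij \<pi>2" and q2: "Q3 = ren \<pi>2 Q2" unfolding variant_def by blast
  note b = b1 b2 and q = q1 q2
  have "Q3 = ren (\<pi>2 \<circ> \<pi>1) Q1" by (simp only: q ren_comp)
  then show ?thesis unfolding variant_def by (intro exI[of _ "\<pi>2 \<circ> \<pi>1"] conjI bij_comp b)
qed

lemma variant_succ: "variant Q1 Q2 \<Longrightarrow> ldnf_succeeds P Q1 \<Longrightarrow> ldnf_succeeds P Q2"
  unfolding variant_def by (elim exE conjE) (simp only: sem_ren)
lemma variant_ffails: "variant Q1 Q2 \<Longrightarrow> ldnf_ffails P Q1 \<Longrightarrow> ldnf_ffails P Q2"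
  unfolding variant_def by (elim exE conjE) (simp only: sem_ren)
lemma variant_term: "variant Q1 Q2 \<Longrightarrow> ldnf_terminates P Q1 \<Longrightarrow> ldnf_terminates P Q2"
  unfolding variant_def by (elim exE conjE) (simp only: term_ren)
lemma variant_res: "variant Q1 Q2 \<Longrightarrow> ld_resolvent P Q2 Q' \<Longrightarrow> ld_resolvent P Q1 Q'"
  unfolding variant_def by (elim exE conjE) (simp only: res_ren)

lemma variant_inj: "inj_on f (qvars Q) \<Longrightarrow> variant Q (ren f Q)"
proof -
  assume a: "inj_on f (qvars Q)"
  obtain \<pi> where b: "bij \<pi>" and e: "\<forall>x\<in>qvars Q. \<pi> x = f x"
    using perm_ext[OF finite_qvars a] by blast
  have "ren f Q = ren \<pi> Q"
  proof (rule qsubst_cong)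
    fix x assume "x \<in> qvars Q"
    then show "vr f x = vr \<pi> x" using e by (simp add: vr_def)
  qed
  then show ?thesis unfolding variant_def by (intro exI[of _ \<pi>] conjI b)
qed

definition is_tmgu :: "'f subst \<Rightarrow> 'f trm \<Rightarrow> 'f trm \<Rightarrow> bool" where
  "is_tmgu \<theta> s t \<longleftrightarrow> tsubst \<theta> s = tsubst \<theta> t \<and>
     (\<forall>\<sigma>. tsubst \<sigma> s = tsubst \<sigma> t \<longrightarrow> (\<exists>\<delta>. \<forall>x. \<sigma> x = tsubst \<delta> (\<theta> x)))"

lemma is_mgu_tmgu: "is_mgu \<theta> a b \<longleftrightarrow> is_tmgu \<theta> (atm a) (atm b)"
  by (simp add: is_mgu_def is_tmgu_def unifier_atm)

lemma tsubst_eq_Var: "tsubst \<delta> u = Var x \<Longrightarrow> \<exists>y. u = Var y \<and> \<delta> y = Var x"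
  by (cases u) auto

lemma mgu_var:
  fixes \<theta> :: "'f subst"
  assumes m: "is_tmgu \<theta> s t" and u: "tsubst \<sigma>0 s = tsubst \<sigma>0 t"
  shows "\<exists>\<delta>::'f subst. \<forall>x. \<sigma>0 x = Var x \<longrightarrow> (\<exists>y. \<theta> x = Var y \<and> \<delta> y = Var x)"
proof -
  obtain \<delta> where d: "\<forall>x. \<sigma>0 x = tsubst \<delta> (\<theta> x)" using m u by (auto simp: is_tmgu_def)
  have "\<forall>x. \<sigma>0 x = Var x \<longrightarrow> (\<exists>y. \<theta> x = Var y \<and> \<delta> y = Var x)"
  proof (intro allI impI)
    fix x assume "\<sigma>0 x = Var x"
    with d have "tsubst \<delta> (\<theta> x) = Var x" by simp
    then show "\<exists>y. \<theta> x = Var y \<and> \<delta> y = Var x" using tsubst_eq_Var by blast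
  qed
  then show ?thesis by blast
qed

lemma mgu_private:
  assumes m: "is_tmgu \<theta> s t" and x: "x \<notin> tvars s \<union> tvars t"
  shows "\<exists>v. \<theta> x = Var v \<and> (\<forall>y. y \<noteq> x \<longrightarrow> v \<notin> tvars (\<theta> y))"
proof -
  have u: "tsubst \<theta> s = tsubst \<theta> t" using m by (simp add: is_tmgu_def)
  have key: "\<exists>\<delta>. \<delta> w = Var z \<and> (\<forall>y. y \<noteq> x \<longrightarrow> tsubst \<delta> (\<theta> y) = \<theta> y)" if "\<theta> x = Var w" for z w
  proof -
    let ?\<sigma> = "\<theta>(x := Var z)"
    have "tsubst ?\<sigma> s = tsubst \<theta> s" by (rule tsubst_cong) (use x in auto)
    moreover have "tsubst ?\<sigma> t = tsubst \<theta> t" by (rule tsubst_cong) (use x in auto)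
    ultimately have "tsubst ?\<sigma> s = tsubst ?\<sigma> t" using u by simp
    then obtain \<delta> where d: "\<forall>y. ?\<sigma> y = tsubst \<delta> (\<theta> y)" using m unfolding is_tmgu_def by blast
    have "\<delta> w = Var z" using d[rule_format, of x] that by simp
    moreover have "\<forall>y. y \<noteq> x \<longrightarrow> tsubst \<delta> (\<theta> y) = \<theta> y" using d by (metis fun_upd_other)
    ultimately show ?thesis by blast
  qed
  have "\<exists>w. \<theta> x = Var w"
  proof -
    let ?\<sigma> = "\<theta>(x := Var 0)"
    have "tsubst ?\<sigma> s = tsubst \<theta> s" by (rule tsubst_cong) (use x in auto)
    moreover have "tsubst ?\<sigma> t = tsubst \<theta> t" by (rule tsubst_cong) (use x in auto)
    ultimately have "tsubst ?\<sigma> s = tsubst ?\<sigma> t" using u by simp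
    then obtain \<delta> where d: "\<forall>y. ?\<sigma> y = tsubst \<delta> (\<theta> y)" using m unfolding is_tmgu_def by blast
    then have "tsubst \<delta> (\<theta> x) = Var 0" by (metis fun_upd_same)
    then show ?thesis using tsubst_eq_Var by blast
  qed
  then obtain w where w: "\<theta> x = Var w" by blast
  have "w \<notin> tvars (\<theta> y)" if "y \<noteq> x" for y
  proof
    assume wy: "w \<in> tvars (\<theta> y)"
    obtain \<delta> where "\<delta> w = Var (Suc w)" "\<forall>y. y \<noteq> x \<longrightarrow> tsubst \<delta> (\<theta> y) = \<theta> y" using key[OF w] by blast
    then have "\<delta> w = Var w" using tsubst_id_vars wy that by metis
    with \<open>\<delta> w = Var (Suc w)\<close> show False by simp
  qed
  then show ?thesis using w by blast
qed

fun nus :: "'f msym trm \<Rightarrow> 'f msym trm set" where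
  "nus (Var x) = {}"
| "nus (Fn (Usr f) ts) = \<Union> (set (map nus ts))"
| "nus (Fn h ts) = {Fn h ts}"

lemma finite_nus[simp]: "finite (nus t)"
proof (induction t)
  case (Var x) then show ?case by simp
next
  case (Fn h ts) then show ?case by (cases h) auto
qed

fun sk :: "('f msym trm \<Rightarrow> nat) \<Rightarrow> 'f msym trm \<Rightarrow> 'f trm" where
  "sk g (Var x) = Var (2 * x)"
| "sk g (Fn (Usr f) ts) = Fn f (map (sk g) ts)"
| "sk g (Fn h ts) = Var (2 * g (Fn h ts) + 1)"

lemma sk_subst: "sk g (tsubst \<sigma> (map_trm Usr w)) = tsubst (\<lambda>x. sk g (\<sigma> x)) w"
  by (induction w) auto

definition kap :: "'f msym trm set \<Rightarrow> ('f msym trm \<Rightarrow> nat) \<Rightarrow> nat \<Rightarrow> 'f msym trm" where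
  "kap T g n = (if even n then Var (n div 2) else the_inv_into T g (n div 2))"

lemma sk_back: "nus u \<subseteq> T \<Longrightarrow> inj_on g T \<Longrightarrow> tsubst (kap T g) (map_trm Usr (sk g u)) = u"
proof (induction u)
  case (Var x) then show ?case by (simp add: kap_def)
next
  case (Fn h ts)
  show ?case
  proof (cases h)
    case (Usr f)
    then have "\<forall>t\<in>set ts. tsubst (kap T g) (map_trm Usr (sk g t)) = t"
      using Fn by auto
    then show ?thesis using Usr by (auto intro: map_idI)
  next
    case Comma
    then have "Fn h ts \<in> T" using Fn.prems by simp
    then show ?thesis using Comma Fn.prems by (simp add: kap_def the_inv_into_f_f)
  next
    case NegSym
    then have "Fn h ts \<in> T" using Fn.prems by simp
    then show ?thesis using NegSym Fn.prems by (simp add: kap_def the_inv_into_f_f)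
  next
    case TrueSym
    then have "Fn h ts \<in> T" using Fn.prems by simp
    then show ?thesis using TrueSym Fn.prems by (simp add: kap_def the_inv_into_f_f)
  next
    case Solve
    then have "Fn h ts \<in> T" using Fn.prems by simp
    then show ?thesis using Solve Fn.prems by (simp add: kap_def the_inv_into_f_f)
  next
    case ClauseSym
    then have "Fn h ts \<in> T" using Fn.prems by simp
    then show ?thesis using ClauseSym Fn.prems by (simp add: kap_def the_inv_into_f_f)
  qed
qed

lemma lift_mgu:
  assumes m: "is_tmgu \<theta> s t"
    and u: "tsubst \<sigma> (map_trm Usr s) = tsubst \<sigma> (map_trm Usr t)"
  shows "\<exists>\<delta>. \<forall>x. \<sigma> x = tsubst \<delta> (map_trm Usr (\<theta> x))"
proof -
  define V where "V = tvars s \<union> tvars t"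
  define v where "v x = (case \<theta> x of Var y \<Rightarrow> y | _ \<Rightarrow> 0)" for x
  have pv: "\<theta> x = Var (v x) \<and> (\<forall>y. y \<noteq> x \<longrightarrow> v x \<notin> tvars (\<theta> y))" if "x \<notin> V" for x
    using mgu_private[OF m, of x] that by (auto simp: V_def v_def)
  define T where "T = (\<Union>x\<in>V. nus (\<sigma> x))"
  have finT: "finite T" by (simp add: T_def V_def)
  obtain g :: "'a msym trm \<Rightarrow> nat" and n where "g ` T = {i. i < n}" and gi: "inj_on g T"
    using finite_imp_inj_to_nat_seg[OF finT] by blast
  define \<sigma>o where "\<sigma>o x = (if x \<in> V then sk g (\<sigma> x) else Var x)" for x
  have so_s: "tsubst \<sigma>o s = sk g (tsubst \<sigma> (map_trm Usr s))"
    by (simp add: sk_subst) (rule tsubst_cong, simp add: \<sigma>o_def V_def)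
  have so_t: "tsubst \<sigma>o t = sk g (tsubst \<sigma> (map_trm Usr t))"
    by (simp add: sk_subst) (rule tsubst_cong, simp add: \<sigma>o_def V_def)
  have "tsubst \<sigma>o s = tsubst \<sigma>o t" using so_s so_t u by simp
  moreover have "\<forall>\<sigma>. tsubst \<sigma> s = tsubst \<sigma> t \<longrightarrow> (\<exists>\<delta>. \<forall>x. \<sigma> x = tsubst \<delta> (\<theta> x))"
    using m by (simp add: is_tmgu_def)
  ultimately have "\<exists>\<delta>. \<forall>x. \<sigma>o x = tsubst \<delta> (\<theta> x)" by (rule_tac mp[OF spec[of _ \<sigma>o]])
  then obtain \<delta>o where do: "\<forall>x. \<sigma>o x = tsubst \<delta>o (\<theta> x)" by blast
  have injv: "inj_on v (-V)"
  proof (rule inj_onI)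
    fix x y assume xy: "x \<in> -V" "y \<in> -V" "v x = v y"
    show "x = y"
    proof (rule ccontr)
      assume ne: "x \<noteq> y"
      have "v y \<notin> tvars (\<theta> x)" using pv[of y] xy(2) ne by auto
      moreover have "\<theta> x = Var (v x)" using pv[of x] xy(1) by auto
      ultimately show False using xy(3) by simp
    qed
  qed
  define \<delta> where "\<delta> k = (if k \<in> v ` (-V) then \<sigma> (inv_into (-V) v k)
     else tsubst (kap T g) (map_trm Usr (\<delta>o k)))" for k
  have "\<sigma> x = tsubst \<delta> (map_trm Usr (\<theta> x))" for x
  proof (cases "x \<in> V")
    case False
    have th: "\<theta> x = Var (v x)" using pv[of x] False by auto
    have "inv_into (-V) v (v x) = x" using injv False by (simp add: inv_into_f_f)
    then show ?thesis using False th by (simp add: \<delta>_def)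
  next
    case True
    have nv: "k \<notin> v ` (-V)" if "k \<in> tvars (\<theta> x)" for k
    proof
      assume "k \<in> v ` (-V)"
      then obtain y where "y \<notin> V" "v y = k" by blast
      moreover have "y \<noteq> x" using True \<open>y \<notin> V\<close> by blast
      ultimately show False using pv[of y] that \<open>v y = k\<close> by auto
    qed
    have "tsubst \<delta> (map_trm Usr (\<theta> x)) =
          tsubst (\<lambda>k. tsubst (kap T g) (map_trm Usr (\<delta>o k))) (map_trm Usr (\<theta> x))"
      by (rule tsubst_cong) (simp add: \<delta>_def nv)
    also have "\<dots> = tsubst (kap T g) (tsubst (\<lambda>k. map_trm Usr (\<delta>o k)) (map_trm Usr (\<theta> x)))"
      by (simp add: tsubst_comp)
    also have "\<dots> = tsubst (kap T g) (map_trm Usr (tsubst \<delta>o (\<theta> x)))"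
      by (subst tsubst_usr) auto
    also have "\<dots> = tsubst (kap T g) (map_trm Usr (sk g (\<sigma> x)))"
    proof -
      have e: "sk g (\<sigma> x) = tsubst \<delta>o (\<theta> x)" using do[rule_format, of x] True by (simp add: \<sigma>o_def)
      show ?thesis by (simp only: e)
    qed
    also have "\<dots> = \<sigma> x"
      by (rule sk_back[OF _ gi]) (use True in \<open>auto simp: T_def\<close>)
    finally show ?thesis by simp
  qed
  then show ?thesis by blast
qed

definition MP :: "'f clause set \<Rightarrow> 'f msym clause set" where "MP P = M4 \<union> ce P"

definition cec :: "'f clause \<Rightarrow> 'f msym clause" where
  "cec c = ((ClauseSym, [enc_atom (fst c), enc_body (snd c)]), [])"

lemma ce_cec: "ce P = cec ` P" by (simp add: ce_def cec_def)

definition solveQ :: "'f query \<Rightarrow> 'f msym lit" where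
  "solveQ q = Pos (Solve, [enc_body q])"

datatype 'f form = SQ "'f query list" | NegF "'f atom" "'f query list" | ClF "'f atom" nat "'f query list"

fun mq :: "'f form \<Rightarrow> 'f msym query" where
  "mq (SQ Qs) = map solveQ Qs"
| "mq (NegF A Qs) = Neg (Solve, [enc_atom A]) # map solveQ Qs"
| "mq (ClF A b Qs) = Pos (ClauseSym, [enc_atom A, Var b]) # Pos (Solve, [Var b]) # map solveQ Qs"

fun dq :: "'f form \<Rightarrow> 'f query" where
  "dq (SQ Qs) = concat Qs"
| "dq (NegF A Qs) = Neg A # concat Qs"
| "dq (ClF A b Qs) = Pos A # concat Qs"

fun good :: "'f form \<Rightarrow> bool" where
  "good (ClF A b Qs) = (b \<notin> avars A \<and> b \<notin> qvars (concat Qs))"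
| "good _ = True"

fun measq :: "'f query list \<Rightarrow> nat" where
  "measq [] = 0"
| "measq ([] # Qs) = Suc (measq Qs)"
| "measq ([L] # Qs) = 1"
| "measq ((L # L' # Ls) # Qs) = 2"

fun meas :: "'f form \<Rightarrow> nat" where
  "meas (SQ Qs) = measq Qs"
| "meas _ = 0"

lemma measq_map: "measq (map (map g) Qs) = measq Qs"
  by (induction Qs rule: measq.induct) auto

definition dead :: "'f msym query \<Rightarrow> bool" where
  "dead M \<longleftrightarrow> (\<exists>s ts t R. M = Pos (ClauseSym, [Fn s ts, t]) # R \<and> (\<forall>f. s \<noteq> Usr f))"

lemma lvars_solveQ[simp]: "lvars (solveQ q) = qvars q"
  by (simp add: solveQ_def avars_def)

lemma qvars_map_solveQ[simp]: "qvars (map solveQ Qs) = qvars (concat Qs)"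
  by (induction Qs) auto

lemma qvars_concat_map: "qvars (concat (map (map (lsubst \<sigma>)) Qs)) = (\<Union>x\<in>qvars (concat Qs). tvars (\<sigma> x))"
  by (induction Qs) (auto simp: qvars_qsubst)

lemma concat_map_map: "concat (map (map g) Qs) = map g (concat Qs)"
  by (induction Qs) auto

lemma solveQ_subst: "(\<And>x. x \<in> qvars q \<Longrightarrow> \<theta> x = map_trm Usr (\<sigma> x)) \<Longrightarrow>
   lsubst \<theta> (solveQ q) = solveQ (map (lsubst \<sigma>) q)"
  by (simp add: solveQ_def asubst_def enc_body_subst)

lemma solveQs_subst: "(\<And>x. x \<in> qvars (concat Qs) \<Longrightarrow> \<theta> x = map_trm Usr (\<sigma> x)) \<Longrightarrow>
   map (lsubst \<theta>) (map solveQ Qs) = map solveQ (map (map (lsubst \<sigma>)) Qs)"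
  by (induction Qs) (auto simp: solveQ_subst)

lemma M4_cases: "c \<in> M4 \<Longrightarrow>
   c = ((Solve, [Fn TrueSym []]), []) \<or>
   c = ((Solve, [Fn Comma [Var 0, Var 1]]), [Pos (Solve, [Var 0]), Pos (Solve, [Var 1])]) \<or>
   c = ((Solve, [Fn NegSym [Var 0]]), [Neg (Solve, [Var 0])]) \<or>
   c = ((Solve, [Var 0]), [Pos (ClauseSym, [Var 0, Var 1]), Pos (Solve, [Var 1])])"
  by (auto simp: M4_def)

lemma M4_head: "c \<in> M4 \<Longrightarrow> fst (fst (csubst \<rho> c)) = Solve"
  by (auto simp: M4_def csubst_def)

lemma unifier_fst: "unifier \<theta> a b \<Longrightarrow> fst a = fst b"
  unfolding unifier_def by (metis fst_asubst)

lemma is_mgu_unifier: "is_mgu \<theta> a b \<Longrightarrow> unifier \<theta> a b"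
  by (simp add: is_mgu_def)

lemma renaming_vr: "renaming \<rho> \<Longrightarrow> \<exists>r. inj r \<and> \<rho> = vr r"
proof -
  assume "renaming \<rho>"
  then have v: "\<forall>x. \<exists>y. \<rho> x = Var y" and i: "inj \<rho>" by (auto simp: renaming_def)
  define r where "r x = (SOME y. \<rho> x = Var y)" for x
  have e: "\<rho> x = Var (r x)" for x using v by (metis (mono_tags) someI_ex r_def)
  then have "\<rho> = vr r" by (auto simp: vr_def)
  moreover have "inj r" using i e by (metis injI injD trm.inject(1))
  ultimately show ?thesis by blast
qed

lemma renaming_shift: "renaming (vr (\<lambda>x. x + N))"
  by (auto simp: renaming_def vr_def inj_def)

lemma dead_nores: "dead M \<Longrightarrow> \<not> ld_resolvent (MP P) M M'"
proof
  assume d: "dead M" and r: "ld_resolvent (MP P) M M'"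
  from d obtain s ts t R where M: "M = Pos (ClauseSym, [Fn s ts, t]) # R" and s: "\<forall>f. s \<noteq> Usr f"
    by (auto simp: dead_def)
  from r M obtain c \<rho> \<theta> where c: "c \<in> MP P" and m: "is_mgu \<theta> (ClauseSym, [Fn s ts, t]) (fst (csubst \<rho> c))"
    unfolding ld_resolvent_def by auto
  have u: "unifier \<theta> (ClauseSym, [Fn s ts, t]) (fst (csubst \<rho> c))" using m by (simp add: is_mgu_def)
  show False
  proof (cases "c \<in> M4")
    case True
    then show False using unifier_fst[OF u] M4_head[OF True, of \<rho>] by simp
  next
    case False
    then obtain c0 where "c = cec c0" using c by (auto simp: MP_def ce_cec)
    then have "fst (csubst \<rho> c) = (ClauseSym, [tsubst \<rho> (enc_atom (fst c0)), tsubst \<rho> (enc_body (snd c0))])"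
      by (simp add: cec_def csubst_def asubst_def)
    then show False using u s by (simp add: unifier_def asubst_def enc_atom_def)
  qed
qed

lemma mgu_intro:
  assumes "unifier \<theta> a b" and "\<And>\<sigma> x. unifier \<sigma> a b \<Longrightarrow> \<sigma> x = tsubst \<sigma> (\<theta> x)"
  shows "is_mgu \<theta> a b"
  using assms unfolding is_mgu_def by blast

lemma mgu_ren:
  fixes \<theta> :: "'f subst"
  assumes m: "is_mgu \<theta> a b" and u: "unifier \<sigma>0 a b" and D: "\<And>x. x \<in> D \<Longrightarrow> \<sigma>0 x = Var x"
  shows "\<exists>f. inj_on f D \<and> (\<forall>x\<in>D. \<theta> x = Var (f x))"
proof -
  have "is_tmgu \<theta> (atm a) (atm b)" using m by (simp add: is_mgu_tmgu)
  moreover have "tsubst \<sigma>0 (atm a) = tsubst \<sigma>0 (atm b)" using u by (simp add: unifier_atm)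
  ultimately obtain \<delta> :: "'f subst" where d: "\<forall>x. \<sigma>0 x = Var x \<longrightarrow> (\<exists>y. \<theta> x = Var y \<and> \<delta> y = Var x)"
    using mgu_var by blast
  define f where "f x = (case \<theta> x of Var y \<Rightarrow> y | _ \<Rightarrow> 0)" for x
  have e: "\<theta> x = Var (f x) \<and> \<delta> (f x) = Var x" if "x \<in> D" for x
    using d D[OF that] by (auto simp: f_def)
  have "inj_on f D"
  proof (rule inj_onI)
    fix x y assume xy: "x \<in> D" "y \<in> D" "f x = f y"
    have d1: "\<delta> (f x) = Var x" using e[OF xy(1)] by (rule conjunct2)
    have d2: "\<delta> (f y) = Var y" using e[OF xy(2)] by (rule conjunct2)
    show "x = y" using d1 d2 xy(3) by (metis trm.inject(1))
  qed
  then show ?thesis using e by blast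
qed

lemma enc_body_cases:
  "(q = [] \<and> enc_body q = Fn TrueSym []) \<or>
   (\<exists>A. q = [Pos A] \<and> enc_body q = enc_atom A) \<or>
   (\<exists>A. q = [Neg A] \<and> enc_body q = Fn NegSym [enc_atom A]) \<or>
   (\<exists>L L' Ls. q = L # L' # Ls \<and> enc_body q = Fn Comma [enc_lit L, enc_body (L' # Ls)])"
proof (cases q rule: enc_body.cases)
  case 1 then show ?thesis by simp
next
  case (2 L) then show ?thesis by (cases L) auto
next
  case (3 L L' Ls) then show ?thesis by simp
qed

lemma enc_atom_Fn: "enc_atom A = Fn (Usr (fst A)) (map (map_trm Usr) (snd A))"
  by (simp add: enc_atom_def)

lemma tvars_solve_atom: "avars (Solve, [t]) = tvars t"
  by (simp add: avars_def)

lemma lsubst_solve: "lsubst \<theta> (Pos (p, ts)) = Pos (p, map (tsubst \<theta>) ts)"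
  "lsubst \<theta> (Neg (p, ts)) = Neg (p, map (tsubst \<theta>) ts)"
  by (simp_all add: asubst_def)

lemma unifier_simp: "unifier \<theta> (p, ts) (p', us) \<longleftrightarrow> p = p' \<and> map (tsubst \<theta>) ts = map (tsubst \<theta>) us"
  by (simp add: unifier_def asubst_def)

lemma qvars_mq_SQ: "qvars (mq (SQ Qs)) = qvars (concat Qs)" by simp

lemma ren_eq_subst: "(\<And>x. x \<in> qvars Q \<Longrightarrow> \<theta> x = Var (f x)) \<Longrightarrow> map (lsubst \<theta>) Q = ren f Q"
  by (rule qsubst_cong) (simp add: vr_def)

lemma usr_vr: "map_trm Usr (vr f x) = Var (f x)" by (simp add: vr_def)

lemma csubst_c1: "csubst \<rho> ((Solve, [Fn TrueSym []]), []) = ((Solve, [Fn TrueSym []]), [])"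
  by (simp add: csubst_def asubst_def)
lemma csubst_c2: "csubst (vr r) ((Solve, [Fn Comma [Var 0, Var 1]]), [Pos (Solve, [Var 0]), Pos (Solve, [Var 1])])
   = ((Solve, [Fn Comma [Var (r 0), Var (r 1)]]), [Pos (Solve, [Var (r 0)]), Pos (Solve, [Var (r 1)])])"
  by (simp add: csubst_def asubst_def vr_def)
lemma csubst_c3: "csubst (vr r) ((Solve, [Fn NegSym [Var 0]]), [Neg (Solve, [Var 0])])
   = ((Solve, [Fn NegSym [Var (r 0)]]), [Neg (Solve, [Var (r 0)])])"
  by (simp add: csubst_def asubst_def vr_def)
lemma csubst_c4: "csubst (vr r) ((Solve, [Var 0]), [Pos (ClauseSym, [Var 0, Var 1]), Pos (Solve, [Var 1])])
   = ((Solve, [Var (r 0)]), [Pos (ClauseSym, [Var (r 0), Var (r 1)]), Pos (Solve, [Var (r 1)])])"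
  by (simp add: csubst_def asubst_def vr_def)

lemma cvars_c2: "cvars ((Solve, [Fn Comma [Var a, Var b]]), [Pos (Solve, [Var a]), Pos (Solve, [Var b])]) = {a, b}"
  by (auto simp: cvars_def avars_def)
lemma cvars_c3: "cvars ((Solve, [Fn NegSym [Var a]]), [Neg (Solve, [Var a])]) = {a}"
  by (auto simp: cvars_def avars_def)
lemma cvars_c4: "cvars ((Solve, [Var a]), [Pos (ClauseSym, [Var a, Var b]), Pos (Solve, [Var b])]) = {a, b}"
  by (auto simp: cvars_def avars_def)

lemma tsubst_fresh: "(\<And>x. x \<in> tvars t \<Longrightarrow> \<sigma> x = Var x) \<Longrightarrow> tsubst \<sigma> t = t"
proof -
  assume "\<And>x. x \<in> tvars t \<Longrightarrow> \<sigma> x = Var x"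
  then have "tsubst \<sigma> t = tsubst Var t" by (rule tsubst_cong)
  then show ?thesis by simp
qed

lemma mq_SQ_cons: "mq (SQ (q # Qs)) = Pos (Solve, [enc_body q]) # map solveQ Qs"
  by (simp add: solveQ_def)

lemma all_SQ:
  assumes res: "ld_resolvent (MP P) (mq (SQ (q # Qs))) M'"
  shows "dead M' \<or> (\<exists>F'. good F' \<and> M' = mq F' \<and> meas F' < meas (SQ (q # Qs)) \<and>
           variant (dq (SQ (q # Qs))) (dq F'))"
proof -
  let ?M = "mq (SQ (q # Qs))"
  have qv: "qvars ?M = qvars q \<union> qvars (concat Qs)" by simp
  from res obtain c \<rho> \<theta> where c: "c \<in> MP P" and r: "renaming \<rho>"
    and ap: "cvars (csubst \<rho> c) \<inter> qvars ?M = {}"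
    and m: "is_mgu \<theta> (Solve, [enc_body q]) (fst (csubst \<rho> c))"
    and M': "M' = map (lsubst \<theta>) (snd (csubst \<rho> c) @ map solveQ Qs)"
    unfolding ld_resolvent_def mq_SQ_cons by auto
  have u: "unifier \<theta> (Solve, [enc_body q]) (fst (csubst \<rho> c))" using m by (rule is_mgu_unifier)
  obtain r where ir: "inj r" and rho: "\<rho> = vr r" using renaming_vr[OF r] by blast
  have cM4: "c \<in> M4"
  proof (rule ccontr)
    assume "c \<notin> M4"
    then obtain c0 where "c = cec c0" using c by (auto simp: MP_def ce_cec)
    then have "fst (fst (csubst \<rho> c)) = ClauseSym" by (simp add: cec_def csubst_def)
    then show False using unifier_fst[OF u] by simp
  qed
  have rest: "map (lsubst \<theta>) (map solveQ Qs) = map solveQ (map (map (lsubst (vr f))) Qs)"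
    if "\<And>x. x \<in> qvars (concat Qs) \<Longrightarrow> \<theta> x = Var (f x)" for f
    by (rule solveQs_subst) (simp add: usr_vr that)
  from M4_cases[OF cM4] consider
      (c1) "c = ((Solve, [Fn TrueSym []]), [])"
    | (c2) "c = ((Solve, [Fn Comma [Var 0, Var 1]]), [Pos (Solve, [Var 0]), Pos (Solve, [Var 1])])"
    | (c3) "c = ((Solve, [Fn NegSym [Var 0]]), [Neg (Solve, [Var 0])])"
    | (c4) "c = ((Solve, [Var 0]), [Pos (ClauseSym, [Var 0, Var 1]), Pos (Solve, [Var 1])])"
    by blast
  then show ?thesis
  proof cases
    case c1
    have cs: "csubst \<rho> c = ((Solve, [Fn TrueSym []]), [])" by (simp add: c1 csubst_c1)
    have e: "tsubst \<theta> (enc_body q) = Fn TrueSym []" using u by (simp add: cs unifier_simp)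
    have q: "q = []" using enc_body_cases[of q] e by (auto simp: enc_atom_Fn)
    have "unifier Var (Solve, [enc_body q]) (fst (csubst \<rho> c))" by (simp add: cs q unifier_def)
    then obtain f where fi: "inj_on f UNIV" and fe: "\<forall>x\<in>UNIV. \<theta> x = Var (f x)"
      using mgu_ren[OF m, of Var UNIV] by auto
    define F' where "F' = SQ (map (map (lsubst (vr f))) Qs)"
    have R: "map (lsubst \<theta>) (map solveQ Qs) = map solveQ (map (map (lsubst (vr f))) Qs)"
      by (rule rest) (use fe in auto)
    have "M' = mq F'" using M' R by (simp add: cs F'_def)
    moreover have "meas F' < meas (SQ (q # Qs))" by (simp add: F'_def q measq_map)
    moreover have "dq F' = ren f (dq (SQ (q # Qs)))" by (simp add: F'_def q concat_map_map)
    moreover have "variant (dq (SQ (q # Qs))) (ren f (dq (SQ (q # Qs))))"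
      by (rule variant_inj) (use fi in \<open>auto intro: inj_on_subset\<close>)
    ultimately show ?thesis by (intro disjI2 exI[of _ F']) (simp add: F'_def)
  next
    case c2
    let ?a = "r 0" and ?b = "r 1"
    have ab: "?a \<noteq> ?b" using ir by (simp add: inj_eq)
    have cs: "csubst \<rho> c = ((Solve, [Fn Comma [Var ?a, Var ?b]]), [Pos (Solve, [Var ?a]), Pos (Solve, [Var ?b])])"
      unfolding c2 rho by (rule csubst_c2)
    have abq: "?a \<notin> qvars ?M" "?b \<notin> qvars ?M" using ap by (auto simp: cs cvars_c2)
    have e: "tsubst \<theta> (enc_body q) = Fn Comma [\<theta> ?a, \<theta> ?b]" using u by (simp add: cs unifier_simp)
    obtain L L' Ls where q: "q = L # L' # Ls" using enc_body_cases[of q] e by (auto simp: enc_atom_Fn)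
    have ea: "\<theta> ?a = tsubst \<theta> (enc_lit L)" and eb: "\<theta> ?b = tsubst \<theta> (enc_body (L' # Ls))"
      using e by (simp_all add: q)
    define \<sigma>0 where "\<sigma>0 = (Var(?a := enc_lit L, ?b := enc_body (L' # Ls)) :: 'a msym subst)"
    have "tsubst \<sigma>0 (enc_body q) = enc_body q"
      by (rule tsubst_fresh) (use abq in \<open>auto simp: \<sigma>0_def q\<close>)
    then have "unifier \<sigma>0 (Solve, [enc_body q]) (fst (csubst \<rho> c))"
      using ab by (simp add: cs unifier_simp \<sigma>0_def q)
    then obtain f where fi: "inj_on f (-{?a, ?b})" and fe: "\<forall>x\<in>-{?a, ?b}. \<theta> x = Var (f x)"
      using mgu_ren[OF m, of \<sigma>0 "-{?a, ?b}"] by (auto simp: \<sigma>0_def)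
    have sub: "qvars (concat (q # Qs)) \<subseteq> -{?a, ?b}" using abq by auto
    have fe': "\<theta> x = map_trm Usr (vr f x)" if "x \<in> qvars (concat (q # Qs))" for x
      using fe sub that by (auto simp: vr_def)
    define F' where "F' = SQ ([lsubst (vr f) L] # map (lsubst (vr f)) (L' # Ls) # map (map (lsubst (vr f))) Qs)"
    have t1: "\<theta> ?a = enc_lit (lsubst (vr f) L)"
      unfolding ea by (rule enc_lit_subst) (use fe' in \<open>auto simp: q\<close>)
    have t2: "\<theta> ?b = enc_body (map (lsubst (vr f)) (L' # Ls))"
      unfolding eb by (rule enc_body_subst) (use fe' in \<open>auto simp: q\<close>)
    have R: "map (lsubst \<theta>) (map solveQ Qs) = map solveQ (map (map (lsubst (vr f))) Qs)"
      by (rule rest) (use fe' in \<open>auto simp: vr_def\<close>)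
    have "M' = mq F'" using M' R t1 t2 by (simp add: cs F'_def solveQ_def asubst_def)
    moreover have "meas F' < meas (SQ (q # Qs))" by (simp add: F'_def q)
    moreover have "dq F' = ren f (dq (SQ (q # Qs)))" by (simp add: F'_def q concat_map_map)
    moreover have "variant (dq (SQ (q # Qs))) (ren f (dq (SQ (q # Qs))))"
      by (rule variant_inj) (use fi sub in \<open>auto intro: inj_on_subset\<close>)
    ultimately show ?thesis by (intro disjI2 exI[of _ F']) (simp add: F'_def)
  next
    case c3
    let ?a = "r 0"
    have cs: "csubst \<rho> c = ((Solve, [Fn NegSym [Var ?a]]), [Neg (Solve, [Var ?a])])"
      unfolding c3 rho by (rule csubst_c3)
    have abq: "?a \<notin> qvars ?M" using ap by (auto simp: cs cvars_c3)
    have e: "tsubst \<theta> (enc_body q) = Fn NegSym [\<theta> ?a]" using u by (simp add: cs unifier_simp)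
    obtain A where q: "q = [Neg A]" using enc_body_cases[of q] e by (auto simp: enc_atom_Fn)
    have ea: "\<theta> ?a = tsubst \<theta> (enc_atom A)" using e by (simp add: q)
    define \<sigma>0 where "\<sigma>0 = (Var(?a := enc_atom A) :: 'a msym subst)"
    have "tsubst \<sigma>0 (enc_atom A) = enc_atom A"
      by (rule tsubst_fresh) (use abq in \<open>auto simp: \<sigma>0_def q\<close>)
    then have "unifier \<sigma>0 (Solve, [enc_body q]) (fst (csubst \<rho> c))"
      by (simp add: cs unifier_simp \<sigma>0_def q)
    then obtain f where fi: "inj_on f (-{?a})" and fe: "\<forall>x\<in>-{?a}. \<theta> x = Var (f x)"
      using mgu_ren[OF m, of \<sigma>0 "-{?a}"] by (auto simp: \<sigma>0_def)
    have sub: "qvars (concat (q # Qs)) \<subseteq> -{?a}" using abq by auto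
    have fe': "\<theta> x = map_trm Usr (vr f x)" if "x \<in> qvars (concat (q # Qs))" for x
      using fe sub that by (auto simp: vr_def)
    define F' where "F' = NegF (asubst (vr f) A) (map (map (lsubst (vr f))) Qs)"
    have t1: "\<theta> ?a = enc_atom (asubst (vr f) A)"
      unfolding ea by (rule enc_atom_subst) (use fe' in \<open>auto simp: q\<close>)
    have R: "map (lsubst \<theta>) (map solveQ Qs) = map solveQ (map (map (lsubst (vr f))) Qs)"
      by (rule rest) (use fe' in \<open>auto simp: vr_def\<close>)
    have "M' = mq F'" using M' R t1 by (simp add: cs F'_def asubst_def)
    moreover have "meas F' < meas (SQ (q # Qs))" by (simp add: F'_def q)
    moreover have "dq F' = ren f (dq (SQ (q # Qs)))" by (simp add: F'_def q concat_map_map)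
    moreover have "variant (dq (SQ (q # Qs))) (ren f (dq (SQ (q # Qs))))"
      by (rule variant_inj) (use fi sub in \<open>auto intro: inj_on_subset\<close>)
    ultimately show ?thesis by (intro disjI2 exI[of _ F']) (simp add: F'_def)
  next
    case c4
    let ?h = "r 0" and ?b = "r 1"
    have hb: "?h \<noteq> ?b" using ir by (simp add: inj_eq)
    have cs: "csubst \<rho> c = ((Solve, [Var ?h]), [Pos (ClauseSym, [Var ?h, Var ?b]), Pos (Solve, [Var ?b])])"
      unfolding c4 rho by (rule csubst_c4)
    have abq: "?h \<notin> qvars ?M" "?b \<notin> qvars ?M" using ap by (auto simp: cs cvars_c4)
    have eh: "\<theta> ?h = tsubst \<theta> (enc_body q)" using u by (simp add: cs unifier_simp)
    define \<sigma>0 where "\<sigma>0 = (Var(?h := enc_body q) :: 'a msym subst)"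
    have "tsubst \<sigma>0 (enc_body q) = enc_body q"
      by (rule tsubst_fresh) (use abq in \<open>auto simp: \<sigma>0_def\<close>)
    then have "unifier \<sigma>0 (Solve, [enc_body q]) (fst (csubst \<rho> c))"
      by (simp add: cs unifier_simp \<sigma>0_def)
    then obtain f where fi: "inj_on f (-{?h})" and fe: "\<forall>x\<in>-{?h}. \<theta> x = Var (f x)"
      using mgu_ren[OF m, of \<sigma>0 "-{?h}"] by (auto simp: \<sigma>0_def)
    have sub: "qvars (concat (q # Qs)) \<subseteq> -{?h}" using abq by auto
    have fe': "\<theta> x = map_trm Usr (vr f x)" if "x \<in> qvars (concat (q # Qs))" for x
      using fe sub that by (auto simp: vr_def)
    have tb: "\<theta> ?b = Var (f ?b)" using fe hb by auto
    have M'': "M' = Pos (ClauseSym, [\<theta> ?h, Var (f ?b)]) # Pos (Solve, [Var (f ?b)]) #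
                   map solveQ (map (map (lsubst (vr f))) Qs)"
    proof -
      have R: "map (lsubst \<theta>) (map solveQ Qs) = map solveQ (map (map (lsubst (vr f))) Qs)"
        by (rule rest) (use fe' in \<open>auto simp: vr_def\<close>)
      show ?thesis using M' R tb by (simp add: cs asubst_def)
    qed
    show ?thesis
    proof (cases "\<exists>A. q = [Pos A]")
      case True
      then obtain A where q: "q = [Pos A]" by blast
      have t1: "\<theta> ?h = enc_atom (asubst (vr f) A)"
        unfolding eh q by (simp, rule enc_atom_subst) (use fe' in \<open>auto simp: q\<close>)
      define F' where "F' = ClF (asubst (vr f) A) (f ?b) (map (map (lsubst (vr f))) Qs)"
      have "M' = mq F'" using M'' t1 by (simp add: F'_def)
      moreover have "good F'"
      proof -
        have bA: "?b \<notin> avars A \<union> qvars (concat Qs)" using abq by (auto simp: q)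
        have sb: "avars A \<union> qvars (concat Qs) \<union> {?b} \<subseteq> -{?h}" using abq hb by (auto simp: q)
        have "f ?b \<notin> f ` (avars A \<union> qvars (concat Qs))"
        proof
          assume "f ?b \<in> f ` (avars A \<union> qvars (concat Qs))"
          then obtain y where y: "y \<in> avars A \<union> qvars (concat Qs)" "f ?b = f y" by blast
          then have "?b = y" using inj_onD[OF fi] sb by blast
          then show False using y bA by blast
        qed
        then show ?thesis
          by (auto simp: F'_def avars_asubst qvars_concat_map vr_def)
      qed
      moreover have "meas F' < meas (SQ (q # Qs))" by (simp add: F'_def q)
      moreover have "dq F' = ren f (dq (SQ (q # Qs)))" by (simp add: F'_def q concat_map_map)
      moreover have "variant (dq (SQ (q # Qs))) (ren f (dq (SQ (q # Qs))))"
        by (rule variant_inj) (use fi sub in \<open>auto intro: inj_on_subset\<close>)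
      ultimately show ?thesis by (intro disjI2 exI[of _ F']) simp
    next
      case False
      then obtain s ts where e: "enc_body q = Fn s ts" and s: "\<forall>f. s \<noteq> Usr f"
        using enc_body_cases[of q] by auto
      have "\<theta> ?h = Fn s (map (tsubst \<theta>) ts)" using eh e by simp
      then show ?thesis using M'' s by (auto simp: dead_def)
    qed
  qed
qed

lemma ld_resI:
  "c \<in> P \<Longrightarrow> renaming \<rho> \<Longrightarrow> cvars (csubst \<rho> c) \<inter> qvars (Pos A # R) = {} \<Longrightarrow>
   is_mgu \<theta> A (fst (csubst \<rho> c)) \<Longrightarrow> Q' = map (lsubst \<theta>) (snd (csubst \<rho> c) @ R) \<Longrightarrow>
   ld_resolvent P (Pos A # R) Q'"
  unfolding ld_resolvent_def by blast

lemma qsubst_id: "(\<And>x. x \<in> qvars Q \<Longrightarrow> \<theta> x = Var x) \<Longrightarrow> map (lsubst \<theta>) Q = Q"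
proof -
  assume "\<And>x. x \<in> qvars Q \<Longrightarrow> \<theta> x = Var x"
  then have "map (lsubst \<theta>) Q = map (lsubst Var) Q" by (rule qsubst_cong)
  then show ?thesis by simp
qed

lemma M4_MP: "c \<in> M4 \<Longrightarrow> c \<in> MP P" by (simp add: MP_def)

lemma ex_SQ:
  "\<exists>F'. ld_resolvent (MP P) (mq (SQ (q # Qs))) (mq F') \<and> good F' \<and>
        meas F' < meas (SQ (q # Qs)) \<and> dq F' = dq (SQ (q # Qs))"
proof -
  let ?M = "mq (SQ (q # Qs))"
  define N where "N = Suc (Max (insert 0 (qvars ?M)))"
  have fr: "x < N" if "x \<in> qvars ?M" for x
  proof -
    have "x \<le> Max (insert 0 (qvars ?M))" using that by (simp del: mq.simps)
    then show ?thesis by (simp add: N_def)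
  qed
  have frq: "x < N" if "x \<in> qvars q \<or> x \<in> qvars (concat Qs)" for x using fr that by simp
  have restid: "map (lsubst \<theta>) (map solveQ Qs) = map solveQ Qs" if "\<And>x. x < N \<Longrightarrow> \<theta> x = Var x" for \<theta>
    by (rule qsubst_id) (use frq that in auto)
  define \<rho> :: "'a msym subst" where "\<rho> = vr (\<lambda>x. x + N)"
  have r: "renaming \<rho>" by (simp add: \<rho>_def renaming_shift)
  have M: "?M = Pos (Solve, [enc_body q]) # map solveQ Qs" by (rule mq_SQ_cons)
  from enc_body_cases[of q] consider
      (nil) "q = []" | (pos) A where "q = [Pos A]" | (neg) A where "q = [Neg A]"
    | (cons) L L' Ls where "q = L # L' # Ls"
    by blast
  then show ?thesis
  proof cases
    case nil
    let ?c = "((Solve, [Fn TrueSym []]), []) :: 'a msym clause"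
    have c: "?c \<in> MP P" by (rule M4_MP) (simp add: M4_def)
    have cs: "csubst \<rho> ?c = ?c" by (rule csubst_c1)
    have mg: "is_mgu Var (Solve, [enc_body q]) (fst (csubst \<rho> ?c))"
      by (rule mgu_intro) (simp_all add: cs nil unifier_def)
    have "ld_resolvent (MP P) ?M (mq (SQ Qs))"
      unfolding M by (rule ld_resI[OF c r _ mg]) (simp_all add: cs cvars_def avars_def)
    then show ?thesis by (intro exI[of _ "SQ Qs"]) (simp add: nil)
  next
    case (pos A)
    let ?c = "((Solve, [Var 0]), [Pos (ClauseSym, [Var 0, Var 1]), Pos (Solve, [Var 1])]) :: 'a msym clause"
    have c: "?c \<in> MP P" by (rule M4_MP) (simp add: M4_def)
    have cs: "csubst \<rho> ?c = ((Solve, [Var N]), [Pos (ClauseSym, [Var N, Var (Suc N)]), Pos (Solve, [Var (Suc N)])])"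
      unfolding \<rho>_def by (subst csubst_c4) simp
    define \<theta> where "\<theta> = (Var(N := enc_atom A) :: 'a msym subst)"
    have eA: "tsubst \<sigma> (enc_atom A) = enc_atom A" if "\<And>x. x < N \<Longrightarrow> \<sigma> x = Var x" for \<sigma>
      by (rule tsubst_fresh) (use that frq in \<open>auto simp: pos\<close>)
    have mg: "is_mgu \<theta> (Solve, [enc_body q]) (fst (csubst \<rho> ?c))"
    proof (rule mgu_intro)
      show "unifier \<theta> (Solve, [enc_body q]) (fst (csubst \<rho> ?c))"
        using eA[of \<theta>] unfolding cs by (simp add: pos unifier_simp \<theta>_def)
    next
      fix \<sigma> x assume "unifier \<sigma> (Solve, [enc_body q]) (fst (csubst \<rho> ?c))"
      then have "\<sigma> N = tsubst \<sigma> (enc_atom A)" unfolding cs by (simp add: pos unifier_simp)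
      then show "\<sigma> x = tsubst \<sigma> (\<theta> x)" by (simp add: \<theta>_def)
    qed
    define F' where "F' = ClF A (Suc N) Qs"
    have "ld_resolvent (MP P) ?M (mq F')"
      unfolding M
    proof (rule ld_resI[OF c r _ mg])
      show "cvars (csubst \<rho> ?c) \<inter> qvars (Pos (Solve, [enc_body q]) # map solveQ Qs) = {}"
        using M fr[of N] fr[of "Suc N"] unfolding cs by (auto simp: cvars_c4)
      show "mq F' = map (lsubst \<theta>) (snd (csubst \<rho> ?c) @ map solveQ Qs)"
        using restid[of \<theta>] unfolding cs by (simp add: F'_def \<theta>_def asubst_def)
    qed
    moreover have "good F'" using frq[of "Suc N"] by (auto simp: F'_def pos)
    ultimately show ?thesis by (intro exI[of _ F']) (simp add: F'_def pos)
  next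
    case (neg A)
    let ?c = "((Solve, [Fn NegSym [Var 0]]), [Neg (Solve, [Var 0])]) :: 'a msym clause"
    have c: "?c \<in> MP P" by (rule M4_MP) (simp add: M4_def)
    have cs: "csubst \<rho> ?c = ((Solve, [Fn NegSym [Var N]]), [Neg (Solve, [Var N])])"
      unfolding \<rho>_def by (subst csubst_c3) simp
    define \<theta> where "\<theta> = (Var(N := enc_atom A) :: 'a msym subst)"
    have eA: "tsubst \<sigma> (enc_atom A) = enc_atom A" if "\<And>x. x < N \<Longrightarrow> \<sigma> x = Var x" for \<sigma>
      by (rule tsubst_fresh) (use that frq in \<open>auto simp: neg\<close>)
    have mg: "is_mgu \<theta> (Solve, [enc_body q]) (fst (csubst \<rho> ?c))"
    proof (rule mgu_intro)
      show "unifier \<theta> (Solve, [enc_body q]) (fst (csubst \<rho> ?c))"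
        using eA[of \<theta>] unfolding cs by (simp add: neg unifier_simp \<theta>_def)
    next
      fix \<sigma> x assume "unifier \<sigma> (Solve, [enc_body q]) (fst (csubst \<rho> ?c))"
      then have "\<sigma> N = tsubst \<sigma> (enc_atom A)" unfolding cs by (simp add: neg unifier_simp)
      then show "\<sigma> x = tsubst \<sigma> (\<theta> x)" by (simp add: \<theta>_def)
    qed
    define F' where "F' = NegF A Qs"
    have "ld_resolvent (MP P) ?M (mq F')"
      unfolding M
    proof (rule ld_resI[OF c r _ mg])
      show "cvars (csubst \<rho> ?c) \<inter> qvars (Pos (Solve, [enc_body q]) # map solveQ Qs) = {}"
        using M fr[of N] fr[of "Suc N"] unfolding cs by (auto simp: cvars_c3)
      show "mq F' = map (lsubst \<theta>) (snd (csubst \<rho> ?c) @ map solveQ Qs)"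
        using restid[of \<theta>] unfolding cs by (simp add: F'_def \<theta>_def asubst_def)
    qed
    then show ?thesis by (intro exI[of _ F']) (simp add: F'_def neg)
  next
    case (cons L L' Ls)
    let ?c = "((Solve, [Fn Comma [Var 0, Var 1]]), [Pos (Solve, [Var 0]), Pos (Solve, [Var 1])]) :: 'a msym clause"
    have c: "?c \<in> MP P" by (rule M4_MP) (simp add: M4_def)
    have cs: "csubst \<rho> ?c = ((Solve, [Fn Comma [Var N, Var (Suc N)]]), [Pos (Solve, [Var N]), Pos (Solve, [Var (Suc N)])])"
      unfolding \<rho>_def by (subst csubst_c2) simp
    define \<theta> where "\<theta> = (Var(N := enc_lit L, Suc N := enc_body (L' # Ls)) :: 'a msym subst)"
    have eq: "tsubst \<sigma> (enc_body q) = enc_body q" if "\<And>x. x < N \<Longrightarrow> \<sigma> x = Var x" for \<sigma>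
      by (rule tsubst_fresh) (use that frq in auto)
    have mg: "is_mgu \<theta> (Solve, [enc_body q]) (fst (csubst \<rho> ?c))"
    proof (rule mgu_intro)
      show "unifier \<theta> (Solve, [enc_body q]) (fst (csubst \<rho> ?c))"
        using eq[of \<theta>] unfolding cs by (simp add: cons unifier_simp \<theta>_def)
    next
      fix \<sigma> x assume "unifier \<sigma> (Solve, [enc_body q]) (fst (csubst \<rho> ?c))"
      then have "\<sigma> N = tsubst \<sigma> (enc_lit L)" "\<sigma> (Suc N) = tsubst \<sigma> (enc_body (L' # Ls))"
        unfolding cs by (simp_all add: cons unifier_simp)
      then show "\<sigma> x = tsubst \<sigma> (\<theta> x)" by (simp add: \<theta>_def)
    qed
    define F' where "F' = SQ ([L] # (L' # Ls) # Qs)"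
    have "ld_resolvent (MP P) ?M (mq F')"
      unfolding M
    proof (rule ld_resI[OF c r _ mg])
      show "cvars (csubst \<rho> ?c) \<inter> qvars (Pos (Solve, [enc_body q]) # map solveQ Qs) = {}"
        using M fr[of N] fr[of "Suc N"] unfolding cs by (auto simp: cvars_c2)
      show "mq F' = map (lsubst \<theta>) (snd (csubst \<rho> ?c) @ map solveQ Qs)"
        using restid[of \<theta>] unfolding cs by (simp add: F'_def \<theta>_def asubst_def solveQ_def)
    qed
    then show ?thesis by (intro exI[of _ F']) (simp add: F'_def cons)
  qed
qed

lemma dec_subst: "dec (tsubst \<theta> (map_trm Usr t)) = tsubst (\<lambda>x. dec (\<theta> x)) t"
  by (induction t) auto

lemma cvars_cec: "cvars (cec c) = cvars c"
  by (simp add: cec_def cvars_def avars_def)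

lemma csubst_cec: "csubst (vr r) (cec c) = cec (csubst (vr r) c)"
proof -
  have h: "\<And>x. (vr r x :: 'a msym trm) = map_trm Usr (vr r x)" by (simp add: vr_def)
  show ?thesis
    by (simp add: cec_def csubst_def asubst_def enc_atom_subst[OF h] enc_body_subst[OF h])
qed

lemma renaming_vr_obj: "inj r \<Longrightarrow> renaming (vr r)"
  by (auto simp: renaming_def vr_def inj_def)

lemma res_fresh:
  assumes res: "ld_resolvent P Q Q'" and finX: "finite X"
  shows "\<exists>A R c \<rho> \<theta>. Q = Pos A # R \<and> c \<in> P \<and> renaming \<rho> \<and>
     cvars (csubst \<rho> c) \<inter> (qvars Q \<union> X) = {} \<and> is_mgu \<theta> A (fst (csubst \<rho> c)) \<and>
     Q' = map (lsubst \<theta>) (snd (csubst \<rho> c) @ R)"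
proof -
  from res obtain A R c \<rho>0 \<theta>0 where Q: "Q = Pos A # R" and c: "c \<in> P" and r: "renaming \<rho>0"
    and ap: "cvars (csubst \<rho>0 c) \<inter> qvars Q = {}" and m: "is_mgu \<theta>0 A (fst (csubst \<rho>0 c))"
    and Q': "Q' = map (lsubst \<theta>0) (snd (csubst \<rho>0 c) @ R)"
    unfolding ld_resolvent_def by auto
  define S where "S = cvars (csubst \<rho>0 c)"
  define V where "V = qvars Q"
  define N where "N = Suc (Max (insert 0 (V \<union> X \<union> S)))"
  have finU: "finite (insert 0 (V \<union> X \<union> S))" using finX by (simp add: V_def S_def)
  have lt: "x < N" if "x \<in> V \<union> X \<union> S" for x
  proof -
    have "x \<le> Max (insert 0 (V \<union> X \<union> S))" using that finU by simp
    then show ?thesis by (simp add: N_def)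
  qed
  define f where "f x = (if x \<in> V then x else x + N)" for x
  have SV: "S \<inter> V = {}" using ap by (simp add: S_def V_def)
  have fi: "inj_on f (V \<union> S)"
  proof (rule inj_onI)
    fix x y assume xy: "x \<in> V \<union> S" "y \<in> V \<union> S" "f x = f y"
    show "x = y"
    proof (cases "x \<in> V")
      case True
      show ?thesis
      proof (cases "y \<in> V")
        case True with \<open>x \<in> V\<close> xy show ?thesis by (simp add: f_def)
      next
        case False
        then have "f y = y + N" by (simp add: f_def)
        moreover have "f x = x" using True by (simp add: f_def)
        moreover have "x < N" using lt True by blast
        ultimately show ?thesis using xy(3) by simp
      qed
    next
      case False
      show ?thesis
      proof (cases "y \<in> V")
        case True
        then have "f y = y" by (simp add: f_def)
        moreover have "f x = x + N" using False by (simp add: f_def)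
        moreover have "y < N" using lt True by blast
        ultimately show ?thesis using xy(3) by simp
      next
        case False
        then show ?thesis using \<open>x \<notin> V\<close> xy(3) by (simp add: f_def)
      qed
    qed
  qed
  obtain \<pi> where b: "bij \<pi>" and pe: "\<forall>x\<in>V \<union> S. \<pi> x = f x"
    using perm_ext[OF _ fi] by (auto simp: V_def S_def)
  have pV: "\<pi> x = x" if "x \<in> V" for x using pe that by (simp add: f_def)
  have ipV: "inv \<pi> x = x" if "x \<in> V" for x using pV[OF that] b by (metis bij_is_inj inv_f_f)
  have bi: "bij (inv \<pi>)" using b by (simp add: bij_imp_bij_inv)
  have renQ: "ren (inv \<pi>) Q = Q" by (rule qsubst_id) (simp add: vr_def ipV V_def)
  have renQ': "ren (inv \<pi>) (Pos A # R) = Pos A # R" using renQ Q by simp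
  then have AA: "asubst (vr (inv \<pi>)) A = A" and RR: "ren (inv \<pi>) R = R" by simp_all
  have ap': "cvars (csubst \<rho>0 c) \<inter> qvars (ren (inv \<pi>) (Pos A # R)) = {}" using ap Q renQ' by simp
  have m2: "is_mgu \<theta>0 (asubst (vr (inv \<pi>)) A) (fst (csubst \<rho>0 c))" using m AA by simp
  obtain \<rho>' \<theta>' where
    r': "renaming \<rho>'" and cv: "cvars (csubst \<rho>' c) = inv (inv \<pi>) ` cvars (csubst \<rho>0 c)"
    and m': "is_mgu \<theta>' A (fst (csubst \<rho>' c))"
    and e0: "map (lsubst \<theta>') (snd (csubst \<rho>' c) @ R) = map (lsubst \<theta>0) (snd (csubst \<rho>0 c) @ ren (inv \<pi>) R)"
    using res_perm_core[OF bi c r ap' m2] by blast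
  have e': "map (lsubst \<theta>') (snd (csubst \<rho>' c) @ R) = map (lsubst \<theta>0) (snd (csubst \<rho>0 c) @ R)"
    using e0 unfolding RR .
  have "inv (inv \<pi>) = \<pi>" using b by (simp add: inv_inv_eq)
  then have cv': "cvars (csubst \<rho>' c) = \<pi> ` S" using cv by (simp add: S_def)
  have "cvars (csubst \<rho>' c) \<inter> (qvars Q \<union> X) = {}"
  proof -
    have "\<pi> y \<notin> V \<union> X" if "y \<in> S" for y
    proof -
      have "y \<notin> V" using SV that by blast
      then have "\<pi> y = y + N" using pe that by (simp add: f_def)
      moreover have "z < N" if "z \<in> V \<union> X" for z using lt that by blast
      ultimately show ?thesis by force
    qed
    then show ?thesis using cv' by (auto simp: V_def)
  qed
  then show ?thesis using Q c r' m' e' Q' by metis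
qed

lemma qvars_mq_ClF: "qvars (mq (ClF A b Qs)) = avars A \<union> {b} \<union> qvars (concat Qs)"
  by (auto simp: avars_def)

lemma ClF_res_unfold:
  assumes res: "ld_resolvent (MP P) (mq (ClF A b Qs)) M'"
  shows "\<exists>c0 r \<theta>. c0 \<in> P \<and> inj r \<and>
     cvars (csubst (vr r) c0) \<inter> (avars A \<union> {b} \<union> qvars (concat Qs)) = {} \<and>
     is_mgu \<theta> (ClauseSym, [enc_atom A, Var b])
        (ClauseSym, [enc_atom (fst (csubst (vr r) c0)), enc_body (snd (csubst (vr r) c0))]) \<and>
     M' = map (lsubst \<theta>) (Pos (Solve, [Var b]) # map solveQ Qs)"
proof -
  from res obtain c \<rho> \<theta> where c: "c \<in> MP P" and r: "renaming \<rho>"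
    and ap: "cvars (csubst \<rho> c) \<inter> qvars (mq (ClF A b Qs)) = {}"
    and m: "is_mgu \<theta> (ClauseSym, [enc_atom A, Var b]) (fst (csubst \<rho> c))"
    and M': "M' = map (lsubst \<theta>) (snd (csubst \<rho> c) @ Pos (Solve, [Var b]) # map solveQ Qs)"
    unfolding ld_resolvent_def by auto
  have u: "unifier \<theta> (ClauseSym, [enc_atom A, Var b]) (fst (csubst \<rho> c))" using m by (rule is_mgu_unifier)
  obtain r where ir: "inj r" and rho: "\<rho> = vr r" using renaming_vr[OF r] by blast
  have "c \<notin> M4"
  proof
    assume "c \<in> M4"
    then show False using unifier_fst[OF u] M4_head by fastforce
  qed
  then obtain c0 where c0: "c0 \<in> P" and cc: "c = cec c0" using c by (auto simp: MP_def ce_cec)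
  have cs: "csubst \<rho> c = cec (csubst (vr r) c0)" by (simp add: cc rho csubst_cec)
  show ?thesis
  proof (intro exI conjI)
    show "c0 \<in> P" by (rule c0)
    show "inj r" by (rule ir)
    show "cvars (csubst (vr r) c0) \<inter> (avars A \<union> {b} \<union> qvars (concat Qs)) = {}"
      using ap by (simp add: cs cvars_cec qvars_mq_ClF del: mq.simps)
    show "is_mgu \<theta> (ClauseSym, [enc_atom A, Var b])
        (ClauseSym, [enc_atom (fst (csubst (vr r) c0)), enc_body (snd (csubst (vr r) c0))])"
      using m by (simp add: cs cec_def)
    show "M' = map (lsubst \<theta>) (Pos (Solve, [Var b]) # map solveQ Qs)"
      using M' by (simp add: cs cec_def)
  qed
qed

lemma cvars_split: "cvars c = avars (fst c) \<union> qvars (snd c)" by (simp add: cvars_def)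

lemma all_ClF:
  assumes g: "good (ClF A b Qs)" and res: "ld_resolvent (MP P) (mq (ClF A b Qs)) M'"
  shows "\<exists>F'. good F' \<and> M' = mq F' \<and> (\<exists>O'. ld_resolvent P (dq (ClF A b Qs)) O' \<and> variant (dq F') O')"
proof -
  obtain c0 r \<theta> where c0: "c0 \<in> P" and ir: "inj r"
    and ap: "cvars (csubst (vr r) c0) \<inter> (avars A \<union> {b} \<union> qvars (concat Qs)) = {}"
    and m: "is_mgu \<theta> (ClauseSym, [enc_atom A, Var b])
        (ClauseSym, [enc_atom (fst (csubst (vr r) c0)), enc_body (snd (csubst (vr r) c0))])"
    and M': "M' = map (lsubst \<theta>) (Pos (Solve, [Var b]) # map solveQ Qs)"
    using ClF_res_unfold[OF res] by blast
  define c' where "c' = csubst (vr r) c0"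
  define H where "H = fst c'"
  define B where "B = snd c'"
  have bA: "b \<notin> avars A" and bQ: "b \<notin> qvars (concat Qs)" using g by auto
  have bH: "b \<notin> avars H" and bB: "b \<notin> qvars B" using ap by (auto simp: H_def B_def c'_def cvars_split)
  have apo: "cvars c' \<inter> qvars (Pos A # concat Qs) = {}" using ap by (auto simp: c'_def)
  have m': "is_mgu \<theta> (ClauseSym, [enc_atom A, Var b]) (ClauseSym, [enc_atom H, enc_body B])"
    using m by (simp add: H_def B_def c'_def)
  have u1: "tsubst \<theta> (enc_atom A) = tsubst \<theta> (enc_atom H)" and u2: "\<theta> b = tsubst \<theta> (enc_body B)"
    using is_mgu_unifier[OF m'] by (simp_all add: unifier_simp)
  define \<theta>o where "\<theta>o x = dec (\<theta> x)" for x
  have decA: "dec (tsubst \<theta> (enc_atom X)) = atm (asubst \<theta>o X)" for X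
    by (simp add: enc_atom_atm dec_subst atm_subst \<theta>o_def[abs_def])
  have AH: "asubst \<theta>o A = asubst \<theta>o H" using decA[of A] decA[of H] u1 by (simp add: atm_inj)
  define \<sigma> where "\<sigma> x = (if x = b then enc_body (map (lsubst \<theta>o) B) else map_trm Usr (\<theta>o x))" for x
  have sA: "tsubst \<sigma> (enc_atom X) = enc_atom (asubst \<theta>o X)" if "b \<notin> avars X" for X
    by (rule enc_atom_subst) (use that in \<open>auto simp: \<sigma>_def\<close>)
  have sB: "tsubst \<sigma> (enc_body B) = enc_body (map (lsubst \<theta>o) B)"
    by (rule enc_body_subst) (use bB in \<open>auto simp: \<sigma>_def\<close>)
  have "unifier \<sigma> (ClauseSym, [enc_atom A, Var b]) (ClauseSym, [enc_atom H, enc_body B])"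
    using sA[OF bA] sA[OF bH] sB AH by (simp add: unifier_simp \<sigma>_def)
  then obtain \<delta> where d: "\<forall>x. \<sigma> x = tsubst \<delta> (\<theta> x)" using m' by (auto simp: is_mgu_def)
  have thU: "\<theta> x = map_trm Usr (\<theta>o x)" if "x \<noteq> b" for x
  proof -
    have "tsubst \<delta> (\<theta> x) = map_trm Usr (\<theta>o x)" using d that by (metis \<sigma>_def)
    then show ?thesis unfolding \<theta>o_def by (rule inst_usr)
  qed
  have thb: "\<theta> b = enc_body (map (lsubst \<theta>o) B)"
    unfolding u2 by (rule enc_body_subst) (metis thU bB)
  have restQ: "map (lsubst \<theta>) (map solveQ Qs) = map solveQ (map (map (lsubst \<theta>o)) Qs)"
    by (rule solveQs_subst) (metis thU bQ)
  define F' where "F' = SQ (map (lsubst \<theta>o) B # map (map (lsubst \<theta>o)) Qs)"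
  have MF: "M' = mq F'" using M' thb restQ by (simp add: F'_def solveQ_def asubst_def)
  have dF: "dq F' = map (lsubst \<theta>o) (B @ concat Qs)" by (simp add: F'_def concat_map_map)
  define \<theta>s where "\<theta>s x = (if x = b then Var 0 else tsubst (vr Suc) (\<theta>o x))" for x
  have th_s: "\<theta>s x = tsubst (vr Suc) (\<theta>o x)" if "x \<noteq> b" for x using that by (simp add: \<theta>s_def)
  have sAs: "asubst \<theta>s X = asubst (vr Suc) (asubst \<theta>o X)" if "b \<notin> avars X" for X
  proof -
    have "asubst \<theta>s X = asubst (\<lambda>x. tsubst (vr Suc) (\<theta>o x)) X"
      by (rule asubst_cong) (metis that th_s)
    then show ?thesis by (simp add: asubst_comp)
  qed
  have mgs: "is_mgu \<theta>s A H"
    unfolding is_mgu_def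
  proof (intro conjI allI impI)
    show "unifier \<theta>s A H" using sAs[OF bA] sAs[OF bH] AH by (simp add: unifier_def)
  next
    fix \<sigma>1 assume u: "unifier \<sigma>1 A H"
    define \<sigma>m where "\<sigma>m x = (if x = b then enc_body (map (lsubst \<sigma>1) B) else map_trm Usr (\<sigma>1 x))" for x
    have mA: "tsubst \<sigma>m (enc_atom X) = enc_atom (asubst \<sigma>1 X)" if "b \<notin> avars X" for X
      by (rule enc_atom_subst) (use that in \<open>auto simp: \<sigma>m_def\<close>)
    have mB: "tsubst \<sigma>m (enc_body B) = enc_body (map (lsubst \<sigma>1) B)"
      by (rule enc_body_subst) (use bB in \<open>auto simp: \<sigma>m_def\<close>)
    have "unifier \<sigma>m (ClauseSym, [enc_atom A, Var b]) (ClauseSym, [enc_atom H, enc_body B])"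
      using mA[OF bA] mA[OF bH] mB u unfolding unifier_simp by (simp add: unifier_def \<sigma>m_def)
    then obtain \<delta>1 where d1: "\<forall>x. \<sigma>m x = tsubst \<delta>1 (\<theta> x)" using m' by (auto simp: is_mgu_def)
    define \<delta>s where "\<delta>s n = (case n of 0 \<Rightarrow> \<sigma>1 b | Suc k \<Rightarrow> dec (\<delta>1 k))" for n
    have "\<sigma>1 x = tsubst \<delta>s (\<theta>s x)" for x
    proof (cases "x = b")
      case True then show ?thesis by (simp add: \<theta>s_def \<delta>s_def)
    next
      case False
      have "tsubst \<delta>s (\<theta>s x) = tsubst (\<lambda>y. tsubst \<delta>s (vr Suc y)) (\<theta>o x)"
        by (simp add: th_s[OF False] tsubst_comp)
      also have "\<dots> = tsubst (\<lambda>k. dec (\<delta>1 k)) (\<theta>o x)"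
        by (simp add: vr_def \<delta>s_def)
      also have "\<dots> = dec (tsubst \<delta>1 (map_trm Usr (\<theta>o x)))" by (simp add: dec_subst)
      also have "\<dots> = dec (tsubst \<delta>1 (\<theta> x))" using thU[OF False] by simp
      also have "\<dots> = dec (\<sigma>m x)" using d1 by simp
      also have "\<dots> = \<sigma>1 x" using False by (simp add: \<sigma>m_def)
      finally show ?thesis by simp
    qed
    then show "\<exists>\<delta>. \<forall>x. \<sigma>1 x = tsubst \<delta> (\<theta>s x)" by blast
  qed
  define O' where "O' = map (lsubst \<theta>s) (B @ concat Qs)"
  have resO: "ld_resolvent P (Pos A # concat Qs) O'"
  proof (rule ld_resI[OF c0 renaming_vr_obj[OF ir]])
    show "cvars (csubst (vr r) c0) \<inter> qvars (Pos A # concat Qs) = {}" using apo by (simp add: c'_def)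
    show "is_mgu \<theta>s A (fst (csubst (vr r) c0))" using mgs by (simp add: H_def c'_def)
    show "O' = map (lsubst \<theta>s) (snd (csubst (vr r) c0) @ concat Qs)" by (simp add: O'_def B_def c'_def)
  qed
  have "O' = map (lsubst (\<lambda>x. tsubst (vr Suc) (\<theta>o x))) (B @ concat Qs)"
    unfolding O'_def by (rule qsubst_cong) (metis th_s bB bQ UnE qvars_simps(3))
  also have "\<dots> = ren Suc (dq F')" by (simp add: dF lsubst_comp)
  finally have "variant (dq F') O'" using variant_inj[of Suc "dq F'"] by simp
  then show ?thesis using MF resO by (intro exI[of _ F']) (auto simp: F'_def)
qed

lemma ex_ClF:
  assumes g: "good (ClF A b Qs)" and res: "ld_resolvent P (Pos A # concat Qs) O'"
  shows "\<exists>F'. ld_resolvent (MP P) (mq (ClF A b Qs)) (mq F') \<and> good F' \<and> dq F' = O'"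
proof -
  obtain A0 R c0 \<rho>o \<theta>o where QQ: "Pos A # concat Qs = Pos A0 # R" and c0: "c0 \<in> P" and ro: "renaming \<rho>o"
    and ap: "cvars (csubst \<rho>o c0) \<inter> (qvars (Pos A # concat Qs) \<union> {b}) = {}"
    and mo: "is_mgu \<theta>o A0 (fst (csubst \<rho>o c0))"
    and O': "O' = map (lsubst \<theta>o) (snd (csubst \<rho>o c0) @ R)"
    using res_fresh[OF res, of "{b}"] by blast
  have A0: "A0 = A" and R: "R = concat Qs" using QQ by simp_all
  obtain r where ir: "inj r" and rho: "\<rho>o = vr r" using renaming_vr[OF ro] by blast
  define c' where "c' = csubst (vr r) c0"
  define H where "H = fst c'"
  define B where "B = snd c'"
  have bA: "b \<notin> avars A" and bQ: "b \<notin> qvars (concat Qs)" using g by auto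
  have bH: "b \<notin> avars H" and bB: "b \<notin> qvars B" using ap by (auto simp: H_def B_def c'_def rho cvars_split)
  have mo': "is_mgu \<theta>o A H" using mo by (simp add: A0 H_def c'_def rho)
  have AH: "asubst \<theta>o A = asubst \<theta>o H" using is_mgu_unifier[OF mo'] by (simp add: unifier_def)
  define \<theta> where "\<theta> x = (if x = b then enc_body (map (lsubst \<theta>o) B) else map_trm Usr (\<theta>o x))" for x
  have tA: "tsubst \<theta> (enc_atom X) = enc_atom (asubst \<theta>o X)" if "b \<notin> avars X" for X
    by (rule enc_atom_subst) (use that in \<open>auto simp: \<theta>_def\<close>)
  have tB: "tsubst \<theta> (enc_body B) = enc_body (map (lsubst \<theta>o) B)"
    by (rule enc_body_subst) (use bB in \<open>auto simp: \<theta>_def\<close>)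
  have mg: "is_mgu \<theta> (ClauseSym, [enc_atom A, Var b]) (ClauseSym, [enc_atom H, enc_body B])"
    unfolding is_mgu_def
  proof (intro conjI allI impI)
    show "unifier \<theta> (ClauseSym, [enc_atom A, Var b]) (ClauseSym, [enc_atom H, enc_body B])"
      using tA[OF bA] tA[OF bH] tB AH unfolding unifier_simp by (simp add: \<theta>_def)
  next
    fix \<sigma> assume u: "unifier \<sigma> (ClauseSym, [enc_atom A, Var b]) (ClauseSym, [enc_atom H, enc_body B])"
    have u1: "tsubst \<sigma> (map_trm Usr (atm A)) = tsubst \<sigma> (map_trm Usr (atm H))"
      using u by (simp add: unifier_simp enc_atom_atm)
    have u2: "\<sigma> b = tsubst \<sigma> (enc_body B)" using u by (simp add: unifier_simp)
    have tm: "is_tmgu \<theta>o (atm A) (atm H)" using mo' by (simp add: is_mgu_tmgu)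
    obtain \<delta> where d: "\<forall>x. \<sigma> x = tsubst \<delta> (map_trm Usr (\<theta>o x))" using lift_mgu[OF tm u1] by blast
    have sig: "\<sigma> = (\<lambda>x. tsubst \<delta> (map_trm Usr (\<theta>o x)))" using d by auto
    have "\<sigma> x = tsubst \<delta> (\<theta> x)" for x
    proof (cases "x = b")
      case True
      have "\<sigma> b = tsubst (\<lambda>x. tsubst \<delta> (map_trm Usr (\<theta>o x))) (enc_body B)"
        using u2 sig by metis
      also have "\<dots> = tsubst \<delta> (tsubst (\<lambda>x. map_trm Usr (\<theta>o x)) (enc_body B))"
        by (simp add: tsubst_comp)
      also have "\<dots> = tsubst \<delta> (enc_body (map (lsubst \<theta>o) B))"
        by (subst enc_body_subst[where \<sigma> = \<theta>o]) auto
      finally show ?thesis using True by (simp add: \<theta>_def)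
    next
      case False then show ?thesis using d by (simp add: \<theta>_def)
    qed
    then show "\<exists>\<delta>. \<forall>x. \<sigma> x = tsubst \<delta> (\<theta> x)" by blast
  qed
  have thU: "\<theta> x = map_trm Usr (\<theta>o x)" if "x \<noteq> b" for x using that by (simp add: \<theta>_def)
  have restQ: "map (lsubst \<theta>) (map solveQ Qs) = map solveQ (map (map (lsubst \<theta>o)) Qs)"
    by (rule solveQs_subst) (metis thU bQ)
  define F' where "F' = SQ (map (lsubst \<theta>o) B # map (map (lsubst \<theta>o)) Qs)"
  have cc: "cec c0 \<in> MP P" using c0 by (simp add: MP_def ce_cec)
  have cs: "csubst (vr r) (cec c0) = cec c'" by (simp add: c'_def csubst_cec)
  have "ld_resolvent (MP P) (Pos (ClauseSym, [enc_atom A, Var b]) # (Pos (Solve, [Var b]) # map solveQ Qs)) (mq F')"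
  proof (rule ld_resI[OF cc renaming_vr_obj[OF ir]])
    show "cvars (csubst (vr r) (cec c0)) \<inter> qvars (Pos (ClauseSym, [enc_atom A, Var b]) # Pos (Solve, [Var b]) # map solveQ Qs) = {}"
      using ap by (auto simp: cs cvars_cec c'_def rho avars_def)
    show "is_mgu \<theta> (ClauseSym, [enc_atom A, Var b]) (fst (csubst (vr r) (cec c0)))"
      using mg unfolding cs by (simp add: cec_def H_def B_def)
    show "mq F' = map (lsubst \<theta>) (snd (csubst (vr r) (cec c0)) @ Pos (Solve, [Var b]) # map solveQ Qs)"
      using restQ unfolding cs by (simp add: cec_def F'_def solveQ_def asubst_def \<theta>_def)
  qed
  moreover have "dq F' = O'" by (simp add: F'_def O' concat_map_map R B_def c'_def rho)
  ultimately show ?thesis by (intro exI[of _ F']) (simp add: F'_def)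
qed

lemma dead_ff: "dead M \<Longrightarrow> ldnf_ffails (MP P) M"
proof -
  assume d: "dead M"
  then obtain B R where M: "M = Pos B # R" by (auto simp: dead_def)
  have "\<forall>Q'. ld_resolvent (MP P) (Pos B # R) Q' \<longrightarrow> ldnf_ffails (MP P) Q'"
    using dead_nores[OF d] M by blast
  then show ?thesis unfolding M by (rule ff_pos)
qed

lemma dead_term: "dead M \<Longrightarrow> ldnf_terminates (MP P) M"
proof -
  assume d: "dead M"
  then obtain B R where M: "M = Pos B # R" by (auto simp: dead_def)
  have "\<forall>Q'. ld_resolvent (MP P) (Pos B # R) Q' \<longrightarrow> ldnf_terminates (MP P) Q'"
    using dead_nores[OF d] M by blast
  then show ?thesis unfolding M by (rule term_pos)
qed

lemma dead_not_succ: "dead M \<Longrightarrow> \<not> ldnf_succeeds (MP P) M"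
proof
  assume d: "dead M" and s: "ldnf_succeeds (MP P) M"
  from d obtain B R where M: "M = Pos B # R" by (auto simp: dead_def)
  from s M obtain Q' where "ld_resolvent (MP P) M Q'"
    by (cases rule: ldnf_succeeds.cases) auto
  with dead_nores[OF d] show False by blast
qed

lemma mq_nil: "mq F = [] \<Longrightarrow> F = SQ []"
  by (cases F) auto

lemma mq_Neg: "mq F = Neg B # R \<Longrightarrow> \<exists>A Qs. F = NegF A Qs \<and> B = (Solve, [enc_atom A]) \<and> R = map solveQ Qs"
  by (cases F) (auto simp: solveQ_def Cons_eq_map_conv)

lemma mq_Pos: "mq F = Pos B # R \<Longrightarrow> (\<exists>q Qs. F = SQ (q # Qs)) \<or> (\<exists>A b Qs. F = ClF A b Qs)"
  by (cases F) (auto simp: Cons_eq_map_conv)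

lemma ground_solve: "ground_atom (Solve, [enc_atom A]) \<longleftrightarrow> ground_atom A"
  by (simp add: ground_atom_def avars_def)

lemma mq_single: "mq (SQ [[Pos A]]) = [Pos (Solve, [enc_atom A])]"
  by (simp add: solveQ_def)

lemma variant_nil: "variant X [] \<longleftrightarrow> X = []"
  by (auto simp: variant_def intro: bij_id)

lemma variant_cons: "variant (L' # X) (L # Y) \<Longrightarrow> (\<exists>\<pi>. bij \<pi> \<and> L = lsubst (vr \<pi>) L') \<and> variant X Y"
  by (auto simp: variant_def)

lemma variant_cons_nil: "variant [] (L # Y) \<Longrightarrow> False"
  by (auto simp: variant_def)

lemma variant_Neg_ground:
  assumes "variant (Neg A' # X) (Neg A # Y)" "ground_atom A"
  shows "A' = A \<and> variant X Y"
proof -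
  from variant_cons[OF assms(1)] obtain \<pi> where "Neg A = lsubst (vr \<pi>) (Neg A')" and v: "variant X Y" by blast
  then have e: "A = asubst (vr \<pi>) A'" by simp
  then have "ground_atom A'" using assms(2) ground_asubst_iff by metis
  then have "A = A'" using e ground_asubst by metis
  then show ?thesis using v by simp
qed

lemma variant_Neg_nonground:
  assumes "variant (Neg A' # X) (Neg A # Y)" "\<not> ground_atom A"
  shows "\<not> ground_atom A'"
proof -
  from variant_cons[OF assms(1)] obtain \<pi> where "Neg A = lsubst (vr \<pi>) (Neg A')" by blast
  then have e: "A = asubst (vr \<pi>) A'" by simp
  then show ?thesis using assms(2) ground_asubst_iff by metis
qed

lemma variant_head_Pos: "variant (Neg A' # X) (Pos A # Y) \<Longrightarrow> False"
  by (auto simp: variant_def)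
lemma variant_head_Neg: "variant (Pos A' # X) (Neg A # Y) \<Longrightarrow> False"
  by (auto simp: variant_def)

lemma admin_succ:
  assumes base: "\<And>F. good F \<Longrightarrow> variant (dq F) Ob \<Longrightarrow> (\<forall>q Qs. F \<noteq> SQ (q # Qs)) \<Longrightarrow> ldnf_succeeds (MP P) (mq F)"
  shows "good F \<Longrightarrow> variant (dq F) Ob \<Longrightarrow> ldnf_succeeds (MP P) (mq F)"
proof (induction "meas F" arbitrary: F rule: less_induct)
  case less
  show ?case
  proof (cases "\<exists>q Qs. F = SQ (q # Qs)")
    case True
    then obtain q Qs where F: "F = SQ (q # Qs)" by blast
    obtain F' where r: "ld_resolvent (MP P) (mq (SQ (q # Qs))) (mq F')" and g: "good F'"
      and ml: "meas F' < meas (SQ (q # Qs))" and dd: "dq F' = dq (SQ (q # Qs))"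
      using ex_SQ by blast
    have "ldnf_succeeds (MP P) (mq F')" using less.hyps[of F'] ml g dd less.prems F by simp
    then show ?thesis using r unfolding F mq_SQ_cons by (intro succ_pos) auto
  next
    case False then show ?thesis using base less.prems by blast
  qed
qed

lemma admin_ff:
  assumes base: "\<And>F. good F \<Longrightarrow> variant (dq F) Ob \<Longrightarrow> (\<forall>q Qs. F \<noteq> SQ (q # Qs)) \<Longrightarrow> ldnf_ffails (MP P) (mq F)"
  shows "good F \<Longrightarrow> variant (dq F) Ob \<Longrightarrow> ldnf_ffails (MP P) (mq F)"
proof (induction "meas F" arbitrary: F rule: less_induct)
  case less
  show ?case
  proof (cases "\<exists>q Qs. F = SQ (q # Qs)")
    case True
    then obtain q Qs where F: "F = SQ (q # Qs)" by blast
    have "\<forall>M'. ld_resolvent (MP P) (Pos (Solve, [enc_body q]) # map solveQ Qs) M' \<longrightarrow> ldnf_ffails (MP P) M'"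
    proof (intro allI impI)
      fix M' assume "ld_resolvent (MP P) (Pos (Solve, [enc_body q]) # map solveQ Qs) M'"
      then have r: "ld_resolvent (MP P) (mq (SQ (q # Qs))) M'" unfolding mq_SQ_cons .
      from all_SQ[OF r] show "ldnf_ffails (MP P) M'"
      proof
        assume "dead M'" then show ?thesis by (rule dead_ff)
      next
        assume "\<exists>F'. good F' \<and> M' = mq F' \<and> meas F' < meas (SQ (q # Qs)) \<and> variant (dq (SQ (q # Qs))) (dq F')"
        then obtain F' where g: "good F'" and M': "M' = mq F'" and ml: "meas F' < meas (SQ (q # Qs))"
          and v: "variant (dq (SQ (q # Qs))) (dq F')" by blast
        have "variant (dq F') Ob" using variant_trans[OF variant_sym[OF v]] less.prems F by simp
        then show ?thesis using less.hyps[of F'] ml g M' F by simp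
      qed
    qed
    then show ?thesis unfolding F mq_SQ_cons by (rule ff_pos)
  next
    case False then show ?thesis using base less.prems by blast
  qed
qed

lemma admin_term:
  assumes base: "\<And>F. good F \<Longrightarrow> variant (dq F) Ob \<Longrightarrow> (\<forall>q Qs. F \<noteq> SQ (q # Qs)) \<Longrightarrow> ldnf_terminates (MP P) (mq F)"
  shows "good F \<Longrightarrow> variant (dq F) Ob \<Longrightarrow> ldnf_terminates (MP P) (mq F)"
proof (induction "meas F" arbitrary: F rule: less_induct)
  case less
  show ?case
  proof (cases "\<exists>q Qs. F = SQ (q # Qs)")
    case True
    then obtain q Qs where F: "F = SQ (q # Qs)" by blast
    have "\<forall>M'. ld_resolvent (MP P) (Pos (Solve, [enc_body q]) # map solveQ Qs) M' \<longrightarrow> ldnf_terminates (MP P) M'"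
    proof (intro allI impI)
      fix M' assume "ld_resolvent (MP P) (Pos (Solve, [enc_body q]) # map solveQ Qs) M'"
      then have r: "ld_resolvent (MP P) (mq (SQ (q # Qs))) M'" unfolding mq_SQ_cons .
      from all_SQ[OF r] show "ldnf_terminates (MP P) M'"
      proof
        assume "dead M'" then show ?thesis by (rule dead_term)
      next
        assume "\<exists>F'. good F' \<and> M' = mq F' \<and> meas F' < meas (SQ (q # Qs)) \<and> variant (dq (SQ (q # Qs))) (dq F')"
        then obtain F' where g: "good F'" and M': "M' = mq F'" and ml: "meas F' < meas (SQ (q # Qs))"
          and v: "variant (dq (SQ (q # Qs))) (dq F')" by blast
        have "variant (dq F') Ob" using variant_trans[OF variant_sym[OF v]] less.prems F by simp
        then show ?thesis using less.hyps[of F'] ml g M' F by simp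
      qed
    qed
    then show ?thesis unfolding F mq_SQ_cons by (rule term_pos)
  next
    case False then show ?thesis using base less.prems by blast
  qed
qed

lemma nonadmin_cases: "(\<forall>q Qs. F \<noteq> SQ (q # Qs)) \<Longrightarrow>
   F = SQ [] \<or> (\<exists>A Qs. F = NegF A Qs) \<or> (\<exists>A b Qs. F = ClF A b Qs)"
  by (cases F) (auto, metis neq_Nil_conv)

lemma nonadmin_nil: "(\<forall>q Qs. F \<noteq> SQ (q # Qs)) \<Longrightarrow> variant (dq F) [] \<Longrightarrow> F = SQ []"
  using nonadmin_cases[of F] by (auto simp: variant_nil)

lemma nonadmin_Pos: "(\<forall>q Qs. F \<noteq> SQ (q # Qs)) \<Longrightarrow> variant (dq F) (Pos A # R) \<Longrightarrow>
   \<exists>A' b Qs. F = ClF A' b Qs"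
  using nonadmin_cases[of F] variant_cons_nil variant_head_Pos by fastforce

lemma nonadmin_Neg: "(\<forall>q Qs. F \<noteq> SQ (q # Qs)) \<Longrightarrow> variant (dq F) (Neg A # R) \<Longrightarrow>
   \<exists>A' Qs. F = NegF A' Qs"
  using nonadmin_cases[of F] variant_cons_nil variant_head_Neg by fastforce

lemma obj_to_meta_sf:
  fixes P :: "'f clause set" and Ob :: "'f query"
  shows "ldnf_succeeds P Ob \<Longrightarrow> (\<forall>F. good F \<longrightarrow> variant (dq F) Ob \<longrightarrow> ldnf_succeeds (MP P) (mq F))"
    and "ldnf_ffails P Ob \<Longrightarrow> (\<forall>F. good F \<longrightarrow> variant (dq F) Ob \<longrightarrow> ldnf_ffails (MP P) (mq F))"
proof (induction rule: ldnf_succeeds_ldnf_ffails.inducts)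
  case succ_nil
  show ?case
  proof (intro allI impI)
    fix F :: "'f form" assume "good F" "variant (dq F) []"
    then show "ldnf_succeeds (MP P) (mq F)"
    proof (rule admin_succ[rotated])
      fix F :: "'f form" assume "good F" "variant (dq F) []" "\<forall>q Qs. F \<noteq> SQ (q # Qs)"
      then have "F = SQ []" using nonadmin_nil by blast
      then show "ldnf_succeeds (MP P) (mq F)" by (simp add: ldnf_succeeds_ldnf_ffails.succ_nil)
    qed
  qed
next
  case (succ_pos A R Q')
  show ?case
  proof (intro allI impI)
    fix F :: "'f form" assume "good F" "variant (dq F) (Pos A # R)"
    then show "ldnf_succeeds (MP P) (mq F)"
    proof (rule admin_succ[rotated])
      fix F :: "'f form" assume g: "good F" and v: "variant (dq F) (Pos A # R)" and na: "\<forall>q Qs. F \<noteq> SQ (q # Qs)"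
      then obtain A' b Qs where F: "F = ClF A' b Qs"
        using nonadmin_Pos by blast
      have "ld_resolvent P (dq F) Q'" using variant_res[OF v succ_pos(1)] .
      then obtain F' where r: "ld_resolvent (MP P) (mq (ClF A' b Qs)) (mq F')" and g': "good F'" and d: "dq F' = Q'"
        using ex_ClF[of A' b Qs P Q'] g F by auto
      have "ldnf_succeeds (MP P) (mq F')" using succ_pos(3) g' d variant_refl by metis
      then show "ldnf_succeeds (MP P) (mq F)" using r unfolding F mq.simps
        by (intro ldnf_succeeds_ldnf_ffails.succ_pos) auto
    qed
  qed
next
  case (succ_neg A R)
  show ?case
  proof (intro allI impI)
    fix F :: "'f form" assume "good F" "variant (dq F) (Neg A # R)"
    then show "ldnf_succeeds (MP P) (mq F)"
    proof (rule admin_succ[rotated])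
      fix F :: "'f form" assume g: "good F" and v: "variant (dq F) (Neg A # R)" and na: "\<forall>q Qs. F \<noteq> SQ (q # Qs)"
      then obtain A' Qs where F: "F = NegF A' Qs"
        using nonadmin_Neg by blast
      have AA: "A' = A" and vR: "variant (concat Qs) R" using variant_Neg_ground[of A' "concat Qs" A R] v F succ_neg(1) by auto
      have ff: "ldnf_ffails (MP P) (mq (SQ [[Pos A]]))" using succ_neg(3)[rule_format, of "SQ [[Pos A]]"] variant_refl[of "[Pos A]"] by simp
      have ss: "ldnf_succeeds (MP P) (mq (SQ Qs))" using succ_neg(5)[rule_format, of "SQ Qs"] vR by simp
      show "ldnf_succeeds (MP P) (mq F)"
        using ff ss succ_neg(1) unfolding F AA mq_single
        by (simp add: ldnf_succeeds_ldnf_ffails.succ_neg ground_solve)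
    qed
  qed
next
  case (ff_pos A R)
  show ?case
  proof (intro allI impI)
    fix F :: "'f form" assume "good F" "variant (dq F) (Pos A # R)"
    then show "ldnf_ffails (MP P) (mq F)"
    proof (rule admin_ff[rotated])
      fix F :: "'f form" assume g: "good F" and v: "variant (dq F) (Pos A # R)" and na: "\<forall>q Qs. F \<noteq> SQ (q # Qs)"
      then obtain A' b Qs where F: "F = ClF A' b Qs"
        using nonadmin_Pos by blast
      have "\<forall>M'. ld_resolvent (MP P) (mq (ClF A' b Qs)) M' \<longrightarrow> ldnf_ffails (MP P) M'"
      proof (intro allI impI)
        fix M' assume r: "ld_resolvent (MP P) (mq (ClF A' b Qs)) M'"
        obtain F' O' where g': "good F'" and M': "M' = mq F'" and ro: "ld_resolvent P (dq F) O'"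
          and v': "variant (dq F') O'"
          using all_ClF[OF _ r] g F by blast
        have "ld_resolvent P (Pos A # R) O'" using variant_res[OF variant_sym[OF v] ro] .
        then show "ldnf_ffails (MP P) M'" using ff_pos.IH g' v' M' by blast
      qed
      then show "ldnf_ffails (MP P) (mq F)" unfolding F mq.simps by (rule ldnf_succeeds_ldnf_ffails.ff_pos)
    qed
  qed
next
  case (ff_neg_succ A R)
  show ?case
  proof (intro allI impI)
    fix F :: "'f form" assume "good F" "variant (dq F) (Neg A # R)"
    then show "ldnf_ffails (MP P) (mq F)"
    proof (rule admin_ff[rotated])
      fix F :: "'f form" assume g: "good F" and v: "variant (dq F) (Neg A # R)" and na: "\<forall>q Qs. F \<noteq> SQ (q # Qs)"
      then obtain A' Qs where F: "F = NegF A' Qs"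
        using nonadmin_Neg by blast
      have AA: "A' = A" using variant_Neg_ground[of A' "concat Qs" A R] v F ff_neg_succ(1) by auto
      have ss: "ldnf_succeeds (MP P) (mq (SQ [[Pos A]]))" using ff_neg_succ(3)[rule_format, of "SQ [[Pos A]]"] variant_refl[of "[Pos A]"] by simp
      show "ldnf_ffails (MP P) (mq F)"
        using ss ff_neg_succ(1) unfolding F AA mq_single
        by (simp add: ldnf_succeeds_ldnf_ffails.ff_neg_succ ground_solve)
    qed
  qed
next
  case (ff_neg_ff A R)
  show ?case
  proof (intro allI impI)
    fix F :: "'f form" assume "good F" "variant (dq F) (Neg A # R)"
    then show "ldnf_ffails (MP P) (mq F)"
    proof (rule admin_ff[rotated])
      fix F :: "'f form" assume g: "good F" and v: "variant (dq F) (Neg A # R)" and na: "\<forall>q Qs. F \<noteq> SQ (q # Qs)"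
      then obtain A' Qs where F: "F = NegF A' Qs"
        using nonadmin_Neg by blast
      have AA: "A' = A" and vR: "variant (concat Qs) R" using variant_Neg_ground[of A' "concat Qs" A R] v F ff_neg_ff(1) by auto
      have ff: "ldnf_ffails (MP P) (mq (SQ [[Pos A]]))" using ff_neg_ff(3)[rule_format, of "SQ [[Pos A]]"] variant_refl[of "[Pos A]"] by simp
      have ff2: "ldnf_ffails (MP P) (mq (SQ Qs))" using ff_neg_ff(5)[rule_format, of "SQ Qs"] vR by simp
      show "ldnf_ffails (MP P) (mq F)"
        using ff ff2 ff_neg_ff(1) unfolding F AA mq_single
        by (simp add: ldnf_succeeds_ldnf_ffails.ff_neg_ff ground_solve)
    qed
  qed
qed

lemma meta_to_obj_sf:
  fixes P :: "'f clause set" and M :: "'f msym query"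
  shows "ldnf_succeeds (MP P) M \<Longrightarrow> (\<forall>F. good F \<longrightarrow> M = mq F \<longrightarrow> ldnf_succeeds P (dq F))"
    and "ldnf_ffails (MP P) M \<Longrightarrow> (\<forall>F. good F \<longrightarrow> M = mq F \<longrightarrow> ldnf_ffails P (dq F))"
proof (induction rule: ldnf_succeeds_ldnf_ffails.inducts)
  case succ_nil
  show ?case
  proof (intro allI impI)
    fix F :: "'f form" assume "good F" "[] = mq F"
    then have "F = SQ []" using mq_nil by metis
    then show "ldnf_succeeds P (dq F)" by (simp add: ldnf_succeeds_ldnf_ffails.succ_nil)
  qed
next
  case (succ_pos B R M')
  show ?case
  proof (intro allI impI)
    fix F :: "'f form" assume g: "good F" and e: "Pos B # R = mq F"
    from mq_Pos[OF e[symmetric]] show "ldnf_succeeds P (dq F)"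
    proof
      assume "\<exists>q Qs. F = SQ (q # Qs)"
      then obtain q Qs where F: "F = SQ (q # Qs)" by blast
      have r: "ld_resolvent (MP P) (mq (SQ (q # Qs))) M'" using succ_pos(1) e F by simp
      from all_SQ[OF r] show ?thesis
      proof
        assume "dead M'" then show ?thesis using succ_pos(2) dead_not_succ by blast
      next
        assume "\<exists>F'. good F' \<and> M' = mq F' \<and> meas F' < meas (SQ (q # Qs)) \<and> variant (dq (SQ (q # Qs))) (dq F')"
        then obtain F' where g': "good F'" and M': "M' = mq F'" and v: "variant (dq (SQ (q # Qs))) (dq F')" by blast
        have "ldnf_succeeds P (dq F')" using succ_pos(3) g' M' by blast
        then show ?thesis using variant_succ[OF variant_sym[OF v]] F by simp
      qed
    next
      assume "\<exists>A b Qs. F = ClF A b Qs"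
      then obtain A b Qs where F: "F = ClF A b Qs" by blast
      have r: "ld_resolvent (MP P) (mq (ClF A b Qs)) M'" using succ_pos(1) e F by simp
      obtain F' O' where g': "good F'" and M': "M' = mq F'" and ro: "ld_resolvent P (dq F) O'"
        and v': "variant (dq F') O'" using all_ClF[OF _ r] g F by blast
      have "ldnf_succeeds P (dq F')" using succ_pos(3) g' M' by blast
      then have "ldnf_succeeds P O'" using variant_succ[OF v'] by blast
      then show ?thesis using ro unfolding F dq.simps by (intro ldnf_succeeds_ldnf_ffails.succ_pos) (auto simp: F)
    qed
  qed
next
  case (succ_neg B R)
  show ?case
  proof (intro allI impI)
    fix F :: "'f form" assume g: "good F" and e: "Neg B # R = mq F"
    obtain A Qs where F: "F = NegF A Qs" and B: "B = (Solve, [enc_atom A])" and R: "R = map solveQ Qs"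
      using mq_Neg[OF e[symmetric]] by blast
    have gA: "ground_atom A" using succ_neg(1) B ground_solve by metis
    have ff: "ldnf_ffails P [Pos A]" using succ_neg(3)[rule_format, of "SQ [[Pos A]]"] B by (simp add: solveQ_def)
    have ss: "ldnf_succeeds P (concat Qs)" using succ_neg(5)[rule_format, of "SQ Qs"] R by simp
    show "ldnf_succeeds P (dq F)" using gA ff ss by (simp add: F ldnf_succeeds_ldnf_ffails.succ_neg)
  qed
next
  case (ff_pos B R)
  show ?case
  proof (intro allI impI)
    fix F :: "'f form" assume g: "good F" and e: "Pos B # R = mq F"
    from mq_Pos[OF e[symmetric]] show "ldnf_ffails P (dq F)"
    proof
      assume "\<exists>q Qs. F = SQ (q # Qs)"
      then obtain q Qs where F: "F = SQ (q # Qs)" by blast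
      obtain F' where r: "ld_resolvent (MP P) (mq (SQ (q # Qs))) (mq F')" and g': "good F'"
        and dd: "dq F' = dq (SQ (q # Qs))" using ex_SQ by blast
      have "ldnf_ffails P (dq F')" using ff_pos.IH r g' e F by simp
      then show ?thesis using dd F by simp
    next
      assume "\<exists>A b Qs. F = ClF A b Qs"
      then obtain A b Qs where F: "F = ClF A b Qs" by blast
      have "\<forall>O'. ld_resolvent P (Pos A # concat Qs) O' \<longrightarrow> ldnf_ffails P O'"
      proof (intro allI impI)
        fix O' assume ro: "ld_resolvent P (Pos A # concat Qs) O'"
        obtain F' where r: "ld_resolvent (MP P) (mq (ClF A b Qs)) (mq F')" and g': "good F'" and d: "dq F' = O'"
          using ex_ClF[OF _ ro] g F by auto
        show "ldnf_ffails P O'" using ff_pos.IH r g' e F d by auto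
      qed
      then show ?thesis unfolding F dq.simps by (rule ldnf_succeeds_ldnf_ffails.ff_pos)
    qed
  qed
next
  case (ff_neg_succ B R)
  show ?case
  proof (intro allI impI)
    fix F :: "'f form" assume g: "good F" and e: "Neg B # R = mq F"
    obtain A Qs where F: "F = NegF A Qs" and B: "B = (Solve, [enc_atom A])" and R: "R = map solveQ Qs"
      using mq_Neg[OF e[symmetric]] by blast
    have gA: "ground_atom A" using ff_neg_succ(1) B ground_solve by metis
    have ss: "ldnf_succeeds P [Pos A]" using ff_neg_succ(3)[rule_format, of "SQ [[Pos A]]"] B by (simp add: solveQ_def)
    show "ldnf_ffails P (dq F)" using gA ss by (simp add: F ldnf_succeeds_ldnf_ffails.ff_neg_succ)
  qed
next
  case (ff_neg_ff B R)
  show ?case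
  proof (intro allI impI)
    fix F :: "'f form" assume g: "good F" and e: "Neg B # R = mq F"
    obtain A Qs where F: "F = NegF A Qs" and B: "B = (Solve, [enc_atom A])" and R: "R = map solveQ Qs"
      using mq_Neg[OF e[symmetric]] by blast
    have gA: "ground_atom A" using ff_neg_ff(1) B ground_solve by metis
    have ff: "ldnf_ffails P [Pos A]" using ff_neg_ff(3)[rule_format, of "SQ [[Pos A]]"] B by (simp add: solveQ_def)
    have ff2: "ldnf_ffails P (concat Qs)" using ff_neg_ff(5)[rule_format, of "SQ Qs"] R by simp
    show "ldnf_ffails P (dq F)" using gA ff ff2 by (simp add: F ldnf_succeeds_ldnf_ffails.ff_neg_ff)
  qed
qed

lemma meta_to_obj_term:
  fixes P :: "'f clause set" and M :: "'f msym query"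
  shows "ldnf_terminates (MP P) M \<Longrightarrow> (\<forall>F. good F \<longrightarrow> M = mq F \<longrightarrow> ldnf_terminates P (dq F))"
proof (induction rule: ldnf_terminates.induct)
  case term_nil
  show ?case
  proof (intro allI impI)
    fix F :: "'f form" assume "good F" "[] = mq F"
    then have "F = SQ []" using mq_nil by metis
    then show "ldnf_terminates P (dq F)" by (simp add: ldnf_terminates.term_nil)
  qed
next
  case (term_pos B R)
  show ?case
  proof (intro allI impI)
    fix F :: "'f form" assume g: "good F" and e: "Pos B # R = mq F"
    from mq_Pos[OF e[symmetric]] show "ldnf_terminates P (dq F)"
    proof
      assume "\<exists>q Qs. F = SQ (q # Qs)"
      then obtain q Qs where F: "F = SQ (q # Qs)" by blast
      obtain F' where r: "ld_resolvent (MP P) (mq (SQ (q # Qs))) (mq F')" and g': "good F'"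
        and dd: "dq F' = dq (SQ (q # Qs))" using ex_SQ by blast
      have "ldnf_terminates P (dq F')" using term_pos r g' e F by simp
      then show ?thesis using dd F by simp
    next
      assume "\<exists>A b Qs. F = ClF A b Qs"
      then obtain A b Qs where F: "F = ClF A b Qs" by blast
      have "\<forall>O'. ld_resolvent P (Pos A # concat Qs) O' \<longrightarrow> ldnf_terminates P O'"
      proof (intro allI impI)
        fix O' assume ro: "ld_resolvent P (Pos A # concat Qs) O'"
        obtain F' where r: "ld_resolvent (MP P) (mq (ClF A b Qs)) (mq F')" and g': "good F'" and d: "dq F' = O'"
          using ex_ClF[OF _ ro] g F by auto
        show "ldnf_terminates P O'" using term_pos r g' e F d by auto
      qed
      then show ?thesis unfolding F dq.simps by (rule ldnf_terminates.term_pos)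
    qed
  qed
next
  case (term_flounder B R)
  show ?case
  proof (intro allI impI)
    fix F :: "'f form" assume g: "good F" and e: "Neg B # R = mq F"
    obtain A Qs where F: "F = NegF A Qs" and B: "B = (Solve, [enc_atom A])"
      using mq_Neg[OF e[symmetric]] by blast
    have "\<not> ground_atom A" using term_flounder B ground_solve by metis
    then show "ldnf_terminates P (dq F)" by (simp add: F ldnf_terminates.term_flounder)
  qed
next
  case (term_neg B R)
  show ?case
  proof (intro allI impI)
    fix F :: "'f form" assume g: "good F" and e: "Neg B # R = mq F"
    obtain A Qs where F: "F = NegF A Qs" and B: "B = (Solve, [enc_atom A])" and R: "R = map solveQ Qs"
      using mq_Neg[OF e[symmetric]] by blast
    have gA: "ground_atom A" using term_neg(1) B ground_solve by metis
    have tA: "ldnf_terminates P [Pos A]" using term_neg(3)[rule_format, of "SQ [[Pos A]]"] B by (simp add: solveQ_def)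
    have tR: "ldnf_terminates P (concat Qs)" if ff: "ldnf_ffails P [Pos A]"
    proof -
      have "ldnf_ffails (MP P) (mq (SQ [[Pos A]]))"
        using obj_to_meta_sf(2)[OF ff, rule_format, of "SQ [[Pos A]]"] by (simp add: variant_refl)
      then have "ldnf_ffails (MP P) [Pos B]" using B by (simp add: solveQ_def)
      then show ?thesis using term_neg(4) R by (auto dest: spec[of _ "SQ Qs"])
    qed
    show "ldnf_terminates P (dq F)" using gA tA tR by (simp add: F ldnf_terminates.term_neg)
  qed
qed

lemma obj_to_meta_term:
  fixes P :: "'f clause set" and Ob :: "'f query"
  shows "ldnf_terminates P Ob \<Longrightarrow> (\<forall>F. good F \<longrightarrow> variant (dq F) Ob \<longrightarrow> ldnf_terminates (MP P) (mq F))"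
proof (induction rule: ldnf_terminates.induct)
  case term_nil
  show ?case
  proof (intro allI impI)
    fix F :: "'f form" assume "good F" "variant (dq F) []"
    then show "ldnf_terminates (MP P) (mq F)"
    proof (rule admin_term[rotated])
      fix F :: "'f form" assume "good F" "variant (dq F) []" "\<forall>q Qs. F \<noteq> SQ (q # Qs)"
      then have "F = SQ []" using nonadmin_nil by blast
      then show "ldnf_terminates (MP P) (mq F)" by (simp add: ldnf_terminates.term_nil)
    qed
  qed
next
  case (term_pos A R)
  show ?case
  proof (intro allI impI)
    fix F :: "'f form" assume "good F" "variant (dq F) (Pos A # R)"
    then show "ldnf_terminates (MP P) (mq F)"
    proof (rule admin_term[rotated])
      fix F :: "'f form" assume g: "good F" and v: "variant (dq F) (Pos A # R)" and na: "\<forall>q Qs. F \<noteq> SQ (q # Qs)"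
      then obtain A' b Qs where F: "F = ClF A' b Qs" using nonadmin_Pos by blast
      have "\<forall>M'. ld_resolvent (MP P) (mq (ClF A' b Qs)) M' \<longrightarrow> ldnf_terminates (MP P) M'"
      proof (intro allI impI)
        fix M' assume r: "ld_resolvent (MP P) (mq (ClF A' b Qs)) M'"
        obtain F' O' where g': "good F'" and M': "M' = mq F'" and ro: "ld_resolvent P (dq F) O'"
          and v': "variant (dq F') O'"
          using all_ClF[OF _ r] g F by blast
        have "ld_resolvent P (Pos A # R) O'" using variant_res[OF variant_sym[OF v] ro] .
        then show "ldnf_terminates (MP P) M'" using term_pos g' v' M' by blast
      qed
      then show "ldnf_terminates (MP P) (mq F)" unfolding F mq.simps by (rule ldnf_terminates.term_pos)
    qed
  qed
next
  case (term_flounder A R)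
  show ?case
  proof (intro allI impI)
    fix F :: "'f form" assume "good F" "variant (dq F) (Neg A # R)"
    then show "ldnf_terminates (MP P) (mq F)"
    proof (rule admin_term[rotated])
      fix F :: "'f form" assume g: "good F" and v: "variant (dq F) (Neg A # R)" and na: "\<forall>q Qs. F \<noteq> SQ (q # Qs)"
      then obtain A' Qs where F: "F = NegF A' Qs" using nonadmin_Neg by blast
      have "\<not> ground_atom A'" using variant_Neg_nonground[of A' "concat Qs" A R] v F term_flounder by auto
      then show "ldnf_terminates (MP P) (mq F)"
        by (simp add: F ldnf_terminates.term_flounder ground_solve)
    qed
  qed
next
  case (term_neg A R)
  show ?case
  proof (intro allI impI)
    fix F :: "'f form" assume "good F" "variant (dq F) (Neg A # R)"
    then show "ldnf_terminates (MP P) (mq F)"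
    proof (rule admin_term[rotated])
      fix F :: "'f form" assume g: "good F" and v: "variant (dq F) (Neg A # R)" and na: "\<forall>q Qs. F \<noteq> SQ (q # Qs)"
      then obtain A' Qs where F: "F = NegF A' Qs" using nonadmin_Neg by blast
      have AA: "A' = A" and vR: "variant (concat Qs) R"
        using variant_Neg_ground[of A' "concat Qs" A R] v F term_neg(1) by auto
      have tA: "ldnf_terminates (MP P) [Pos (Solve, [enc_atom A])]"
        using term_neg(3)[rule_format, of "SQ [[Pos A]]"] variant_refl[of "[Pos A]"] by (simp add: solveQ_def)
      have tR: "ldnf_terminates (MP P) (map solveQ Qs)" if ff: "ldnf_ffails (MP P) [Pos (Solve, [enc_atom A])]"
      proof -
        have "ldnf_ffails P (dq (SQ [[Pos A]]))"
          using meta_to_obj_sf(2)[OF ff, rule_format, of "SQ [[Pos A]]"] by (simp add: solveQ_def)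
        then have "ldnf_ffails P [Pos A]" by simp
        then have "\<forall>F. good F \<longrightarrow> variant (dq F) R \<longrightarrow> ldnf_terminates (MP P) (mq F)" using term_neg(4) by blast
        then show ?thesis using vR by (auto dest: spec[of _ "SQ Qs"])
      qed
      show "ldnf_terminates (MP P) (mq F)"
        using tA tR term_neg(1) unfolding F AA by (simp add: ldnf_terminates.term_neg ground_solve)
    qed
  qed
qed

theorem mainTheorem13:
  fixes P :: "'f clause set" and S :: "'f query set"
  assumes "finite P"
  shows "ldnf_terminates_wrt P S \<longleftrightarrow>
         ldnf_terminates_wrt (M4 \<union> ce P) (solve_query ` S)"
proof -
  have sq: "solve_query Q = mq (SQ [Q])" for Q :: "'f query" by (simp add: solve_query_def solveQ_def)
  have MPe: "M4 \<union> ce P = MP P" by (simp add: MP_def)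
  have "ldnf_terminates P Q \<longleftrightarrow> ldnf_terminates (MP P) (solve_query Q)" for Q
  proof
    assume "ldnf_terminates P Q"
    then show "ldnf_terminates (MP P) (solve_query Q)"
      using obj_to_meta_term[rule_format, of P Q "SQ [Q]"] variant_refl[of Q] by (simp add: sq)
  next
    assume "ldnf_terminates (MP P) (solve_query Q)"
    then show "ldnf_terminates P Q"
      using meta_to_obj_term[rule_format, of P "solve_query Q" "SQ [Q]"] by (simp add: sq)
  qed
  then show ?thesis by (simp add: ldnf_terminates_wrt_def MPe)
qed

end
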